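(* Let $\omega\in\Omega_+$ be such that $0$ is $\omega$-transient. Then \[\lim_{K\to\infty}\frac{E_{0,\omega}[D^+_{T_K}]}{K}=1.\]
   Context: Cookie environments: $\Omega_+=([1/2,1]^{\mathbb N})^{\mathbb Z}$. $P_{x,\omega}$ (expectation $E_{x,\omega}$) is the law of the nearest-neighbor process $(X_n)_{n\ge0}$ with $X_0=x$ which, on its $i$-th visit to site $z$, jumps to $z+1$ with probability $\omega(z,i)$ and to $z-1$ otherwise. $T_k=\inf\{n\ge0:X_n=k\}$; $R_k=\{X_n=k\text{ i.o.}\}$. A site $y$ is $\omega$-transient if $P_{x,\omega}[R_y]=0$ for all $x\in\mathbb Z$ (and $\omega$-recurrent if $P_{x,\omega}[R_y]=1$ for all $x$; one of the two always holds). $D_n^z=\sum_{i=1}^{\#\{m<n:X_m=z\}}(2\omega(z,i)-1)$ and $D_n^+=\sum_{z\ge0}D_n^z$. *)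

theory Defs
  imports "HOL-Probability.Probability"
begin

text \<open>Cookie environments: omega z i is the probability to jump right on the i-th
  visit (i \<ge> 1) to site z. The value omega z 0 is never used.\<close>

definition Omega_plus :: "(int \<Rightarrow> nat \<Rightarrow> real) set" where
  "Omega_plus = {\<omega>. \<forall>z. \<forall>i\<ge>1. 1/2 \<le> \<omega> z i \<and> \<omega> z i \<le> 1}"

text \<open>Standard construction of the cookie walk: independent coins xi (z,i) with
  P[xi (z,i)] = omega z i; on its i-th visit to z the walk jumps to z+1 iff xi (z,i).\<close>

definition coin_space :: "(int \<Rightarrow> nat \<Rightarrow> real) \<Rightarrow> (int \<times> nat \<Rightarrow> bool) measure" where
  "coin_space \<omega> = PiM UNIV (\<lambda>(z,i). measure_pmf (bernoulli_pmf (\<omega> z i)))"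

fun walk_hist :: "(int \<times> nat \<Rightarrow> bool) \<Rightarrow> int \<Rightarrow> nat \<Rightarrow> int list" where
  "walk_hist \<xi> x 0 = [x]"
| "walk_hist \<xi> x (Suc n) =
     (let h = walk_hist \<xi> x n; y = last h; k = count_list h y
      in h @ [if \<xi> (y, k) then y + 1 else y - 1])"

definition X :: "(int \<times> nat \<Rightarrow> bool) \<Rightarrow> int \<Rightarrow> nat \<Rightarrow> int" where
  "X \<xi> x n = last (walk_hist \<xi> x n)"

definition D :: "(int \<Rightarrow> nat \<Rightarrow> real) \<Rightarrow> (int \<times> nat \<Rightarrow> bool) \<Rightarrow> int \<Rightarrow> nat \<Rightarrow> int \<Rightarrow> real" where
  "D \<omega> \<xi> x n z = (\<Sum>i\<in>{1..card {m. m < n \<and> X \<xi> x m = z}}. 2 * \<omega> z i - 1)"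

text \<open>Only finitely many z have nonzero D_n^z (the visited ones), so the sum over
  all z \<ge> 0 reduces to the sum over visited sites z \<ge> 0.\<close>
definition D_plus :: "(int \<Rightarrow> nat \<Rightarrow> real) \<Rightarrow> (int \<times> nat \<Rightarrow> bool) \<Rightarrow> int \<Rightarrow> nat \<Rightarrow> real" where
  "D_plus \<omega> \<xi> x n = (\<Sum>z\<in>{z. 0 \<le> z \<and> (\<exists>m<n. X \<xi> x m = z)}. D \<omega> \<xi> x n z)"

text \<open>D^+ evaluated at T_K (set to 0 on the event T_K = \<infinity>).\<close>
definition D_plus_at_T :: "(int \<Rightarrow> nat \<Rightarrow> real) \<Rightarrow> (int \<times> nat \<Rightarrow> bool) \<Rightarrow> int \<Rightarrow> int \<Rightarrow> real" where
  "D_plus_at_T \<omega> \<xi> x K =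
     (if \<exists>n. X \<xi> x n = K then D_plus \<omega> \<xi> x (LEAST n. X \<xi> x n = K) else 0)"

definition transient_site :: "(int \<Rightarrow> nat \<Rightarrow> real) \<Rightarrow> int \<Rightarrow> bool" where
  "transient_site \<omega> y \<longleftrightarrow>
     (\<forall>x. AE \<xi> in coin_space \<omega>. \<not> (\<exists>\<^sub>F n in sequentially. X \<xi> x n = y))"

end

theory Submission
  imports Defs
begin

definition keyL :: "int list \<Rightarrow> int \<times> nat" where
  "keyL l = (last l, count_list l (last l))"

definition stepv :: "bool \<Rightarrow> int \<Rightarrow> int" where
  "stepv b y = (if b then y + 1 else y - 1)"

lemma hist_Suc: "walk_hist \<xi> x (Suc n) = walk_hist \<xi> x n @ [stepv (\<xi> (keyL (walk_hist \<xi> x n))) (last (walk_hist \<xi> x n))]"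
  by (simp add: Let_def keyL_def stepv_def)

declare walk_hist.simps(2)[simp del]

lemma hist_ne[simp]: "walk_hist \<xi> x n \<noteq> []"
  by (cases n) (auto simp: hist_Suc)

lemma hist_len[simp]: "length (walk_hist \<xi> x n) = Suc n"
  by (induction n) (auto simp: hist_Suc)

lemma X_0[simp]: "X \<xi> x 0 = x" by (simp add: X_def)

lemma X_Suc: "X \<xi> x (Suc n) = stepv (\<xi> (keyL (walk_hist \<xi> x n))) (X \<xi> x n)"
  by (simp add: X_def hist_Suc)

lemma hist_map: "walk_hist \<xi> x n = map (X \<xi> x) [0..<Suc n]"
proof (induction n)
  case 0 then show ?case by (simp add: X_def)
next
  case (Suc n)
  have "walk_hist \<xi> x (Suc n) = walk_hist \<xi> x n @ [X \<xi> x (Suc n)]"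
    by (simp add: hist_Suc X_def)
  then show ?case using Suc by simp
qed

lemma hist_snoc: "walk_hist \<xi> x (Suc n) = walk_hist \<xi> x n @ [X \<xi> x (Suc n)]"
  by (simp add: hist_Suc X_def)

lemma last_hist[simp]: "last (walk_hist \<xi> x n) = X \<xi> x n" by (simp add: X_def)

lemma X_step: "X \<xi> x (Suc n) = X \<xi> x n + 1 \<or> X \<xi> x (Suc n) = X \<xi> x n - 1"
  by (simp add: X_Suc stepv_def)

lemma X_bound: "\<bar>X \<xi> x n - x\<bar> \<le> int n"
proof (induction n)
  case (Suc n) then show ?case using X_step[of \<xi> x n] by auto
qed simp

lemma hist_set: "set (walk_hist \<xi> x n) \<subseteq> {x - int n .. x + int n}"
proof -
  { fix k assume "k < Suc n"
    then have "\<bar>X \<xi> x k - x\<bar> \<le> int n" using X_bound[of \<xi> x k] by linarith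
    then have "X \<xi> x k \<in> {x - int n .. x + int n}" by auto }
  then show ?thesis by (auto simp: hist_map)
qed

lemma hist_range_finite: "finite (range (\<lambda>\<xi>. walk_hist \<xi> x n))"
proof (rule finite_subset)
  show "range (\<lambda>\<xi>. walk_hist \<xi> x n) \<subseteq> {l. set l \<subseteq> {x - int n .. x + int n} \<and> length l = Suc n}"
    using hist_set by auto
  show "finite {l. set l \<subseteq> {x - int n .. x + int n} \<and> length l = Suc n}"
    by (rule finite_lists_length_eq) simp
qed

lemma count_hist_key: "count_list (walk_hist \<xi> x n) (X \<xi> x n) \<ge> 1"
proof -
  have "X \<xi> x n \<in> set (walk_hist \<xi> x n)" by (simp add: hist_map)
  then show ?thesis using count_list_0_iff[of "walk_hist \<xi> x n" "X \<xi> x n"] by linarith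
qed

lemma keyL_hist: "keyL (walk_hist \<xi> x n) = (X \<xi> x n, count_list (walk_hist \<xi> x n) (X \<xi> x n))"
  by (simp add: keyL_def)

definition usedL :: "int list \<Rightarrow> (int \<times> nat) set" where
  "usedL l = {keyL (take k l) | k. 1 \<le> k \<and> k < length l}"

lemma usedL_single[simp]: "usedL [a] = {}" by (auto simp: usedL_def)

lemma usedL_snoc: assumes "l \<noteq> []" shows "usedL (l @ [y]) = insert (keyL l) (usedL l)"
proof -
  have "usedL (l @ [y]) = {keyL (take k (l @ [y])) | k. 1 \<le> k \<and> k < Suc (length l)}"
    by (simp add: usedL_def)
  also have "\<dots> = {keyL (take k l) | k. 1 \<le> k \<and> k \<le> length l}"
  proof -
    have "\<And>k. k < Suc (length l) \<Longrightarrow> take k (l @ [y]) = take k l" by (simp add: take_append)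
    then show ?thesis by (metis less_Suc_eq_le)
  qed
  also have "\<dots> = insert (keyL l) (usedL l)"
  proof (rule set_eqI, rule iffI)
    fix a assume "a \<in> {keyL (take k l) | k. 1 \<le> k \<and> k \<le> length l}"
    then obtain k where k: "a = keyL (take k l)" "1 \<le> k" "k \<le> length l" by blast
    show "a \<in> insert (keyL l) (usedL l)"
    proof (cases "k = length l")
      case True then show ?thesis using k by simp
    next
      case False then have "k < length l" using k by simp
      then show ?thesis using k unfolding usedL_def by blast
    qed
  next
    fix a assume a: "a \<in> insert (keyL l) (usedL l)"
    have len: "1 \<le> length l" using assms by (cases l) auto
    show "a \<in> {keyL (take k l) | k. 1 \<le> k \<and> k \<le> length l}"
    proof (cases "a = keyL l")
      case True
      then have "a = keyL (take (length l) l) \<and> 1 \<le> length l \<and> length l \<le> length l" using len by simp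
      then show ?thesis by blast
    next
      case False
      then have "a \<in> usedL l" using a by simp
      then obtain k where "a = keyL (take k l)" "1 \<le> k" "k < length l" unfolding usedL_def by blast
      then show ?thesis by fastforce
    qed
  qed
  finally show ?thesis .
qed

lemma used_inv: "\<forall>(z,c)\<in>usedL (walk_hist \<xi> x n). c \<le> count_list (walk_hist \<xi> x n) z \<and>
   (z = X \<xi> x n \<longrightarrow> c < count_list (walk_hist \<xi> x n) z)"
proof (induction n)
  case 0 then show ?case by simp
next
  case (Suc n)
  let ?h = "walk_hist \<xi> x n"
  have h1: "walk_hist \<xi> x (Suc n) = ?h @ [X \<xi> x (Suc n)]" by (rule hist_snoc)
  have ne: "X \<xi> x (Suc n) \<noteq> X \<xi> x n" using X_step[of \<xi> x n] by auto
  show ?case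
    unfolding h1 usedL_snoc[OF hist_ne]
  proof (intro ballI, clarify)
    fix z c assume zc: "(z, c) \<in> insert (keyL ?h) (usedL ?h)"
    show "c \<le> count_list (?h @ [X \<xi> x (Suc n)]) z \<and>
         (z = X \<xi> x (Suc n) \<longrightarrow> c < count_list (?h @ [X \<xi> x (Suc n)]) z)"
    proof (cases "(z,c) = keyL ?h")
      case True
      then show ?thesis using ne by (auto simp: keyL_def)
    next
      case False
      then have "(z,c) \<in> usedL ?h" using zc by auto
      then show ?thesis using Suc by auto
    qed
  qed
qed

lemma key_fresh: "keyL (walk_hist \<xi> x n) \<notin> usedL (walk_hist \<xi> x n)"
  using used_inv[of \<xi> x n] by (auto simp: keyL_def)

lemma count_X_pos: "count_list (walk_hist \<xi> x n) (X \<xi> x n) \<ge> 1"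
  by (rule count_hist_key)

section \<open>Probability setup\<close>

definition Mc :: "(int \<Rightarrow> nat \<Rightarrow> real) \<Rightarrow> int \<times> nat \<Rightarrow> bool measure" where
  "Mc \<omega> = (\<lambda>(z,i). measure_pmf (bernoulli_pmf (\<omega> z i)))"

lemma coin_eq: "coin_space \<omega> = PiM UNIV (Mc \<omega>)"
  by (simp add: coin_space_def Mc_def)

lemma Mc_simp[simp]: "Mc \<omega> (z,i) = measure_pmf (bernoulli_pmf (\<omega> z i))"
  by (simp add: Mc_def)

lemma pps: "product_prob_space (Mc \<omega>)"
  by (rule product_prob_spaceI) (auto simp: Mc_def prob_space_measure_pmf split: prod.splits)

lemma ps: "prob_space (coin_space \<omega>)"
  unfolding coin_eq by (rule prob_space_PiM) (auto simp: Mc_def prob_space_measure_pmf split: prod.splits)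

lemma space_coin[simp]: "space (coin_space \<omega>) = UNIV"
  unfolding coin_space_def by (auto simp: space_PiM split: prod.splits)

lemma sets_Mc[simp]: "sets (Mc \<omega> k) = UNIV"
  by (cases k) simp

lemma comp_meas: "(\<lambda>\<xi>. \<xi> k) \<in> coin_space \<omega> \<rightarrow>\<^sub>M count_space UNIV"
proof -
  obtain z i where k: "k = (z,i)" by fastforce
  have "(\<lambda>\<xi>. \<xi> k) \<in> coin_space \<omega> \<rightarrow>\<^sub>M Mc \<omega> k"
    unfolding coin_eq by (rule measurable_component_singleton) simp
  then show ?thesis by (simp add: k measurable_pmf_measure2)
qed

lemma hist_meas: "(\<lambda>\<xi>. walk_hist \<xi> x n) \<in> coin_space \<omega> \<rightarrow>\<^sub>M count_space UNIV"
proof (induction n)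
  case 0 then show ?case by simp
next
  case (Suc n)
  have e: "(\<lambda>\<xi>. walk_hist \<xi> x (Suc n)) = (\<lambda>\<xi>. (\<lambda>l \<xi>'. l @ [stepv (\<xi>' (keyL l)) (last l)]) (walk_hist \<xi> x n) \<xi>)"
    by (rule ext) (rule hist_Suc)
  have m1: "(\<lambda>\<xi>'. l @ [stepv (\<xi>' (keyL l)) (last l)]) \<in> coin_space \<omega> \<rightarrow>\<^sub>M count_space UNIV" for l
    by (rule measurable_compose_countable[where f="\<lambda>b \<xi>'. l @ [stepv b (last l)]" and g="\<lambda>\<xi>'. \<xi>' (keyL l)", OF measurable_const comp_meas]) simp
  show ?case unfolding e
    by (rule measurable_compose_countable[OF m1 Suc])
qed

lemma fun_hist_meas: "(\<And>l. F l \<in> space N) \<Longrightarrow> (\<lambda>\<xi>. F (walk_hist \<xi> x n)) \<in> coin_space \<omega> \<rightarrow>\<^sub>M N"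
  by (rule measurable_compose_countable[where f="\<lambda>l \<xi>. F l", OF measurable_const hist_meas])

lemma fun_hist_borel: "(\<lambda>\<xi>. (F (walk_hist \<xi> x n) :: real)) \<in> borel_measurable (coin_space \<omega>)"
  by (rule fun_hist_meas) simp

lemma fun_hist_sets: "{\<xi>. Q (walk_hist \<xi> x n)} \<in> sets (coin_space \<omega>)"
proof -
  have "(\<lambda>\<xi>. Q (walk_hist \<xi> x n)) \<in> coin_space \<omega> \<rightarrow>\<^sub>M count_space UNIV"
    by (rule fun_hist_meas) simp
  from measurable_sets[OF this, of "{True}"] show ?thesis by (simp add: vimage_def)
qed

lemma fun_hist_integrable:
  fixes F :: "int list \<Rightarrow> real"
  shows "integrable (coin_space \<omega>) (\<lambda>\<xi>. F (walk_hist \<xi> x n))"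
proof -
  interpret prob_space "coin_space \<omega>" by (rule ps)
  let ?R = "range (\<lambda>\<xi>. walk_hist \<xi> x n)"
  have "\<And>\<xi>. norm (F (walk_hist \<xi> x n)) \<le> Max ((\<lambda>l. norm (F l)) ` ?R)"
    by (rule Max_ge) (auto intro: hist_range_finite)
  then have ae: "AE \<xi> in coin_space \<omega>. norm (F (walk_hist \<xi> x n)) \<le> Max ((\<lambda>l. norm (F l)) ` ?R)"
    by (intro AE_I2)
  show ?thesis
    by (rule integrable_const_bound[OF ae fun_hist_borel])
qed

definition pr :: "(int \<Rightarrow> nat \<Rightarrow> real) \<Rightarrow> int \<times> nat \<Rightarrow> bool \<Rightarrow> real" where
  "pr \<omega> j b = pmf (bernoulli_pmf (\<omega> (fst j) (snd j))) b"

lemma cyl_prob: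
  assumes "finite S"
  shows "measure (coin_space \<omega>) {\<xi>. \<forall>j\<in>S. \<xi> j = \<beta> j} = (\<Prod>j\<in>S. pr \<omega> j (\<beta> j))"
proof -
  interpret product_prob_space "Mc \<omega>" UNIV by (rule pps)
  interpret C: prob_space "coin_space \<omega>" by (rule ps)
  have "emeasure (PiM UNIV (Mc \<omega>)) {x\<in>space (PiM UNIV (Mc \<omega>)). \<forall>i\<in>S. x i \<in> {\<beta> i}} = (\<Prod>i\<in>S. emeasure (Mc \<omega> i) {\<beta> i})"
    by (rule emeasure_PiM_Collect) (auto simp: assms)
  also have "\<dots> = (\<Prod>i\<in>S. ennreal (pr \<omega> i (\<beta> i)))"
    by (intro prod.cong refl) (auto simp: pr_def Mc_def emeasure_pmf_single split: prod.splits)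
  also have "\<dots> = ennreal (\<Prod>i\<in>S. pr \<omega> i (\<beta> i))"
    by (rule prod_ennreal) (simp add: pr_def)
  finally have "emeasure (coin_space \<omega>) {\<xi>. \<forall>j\<in>S. \<xi> j = \<beta> j} = ennreal (\<Prod>i\<in>S. pr \<omega> i (\<beta> i))"
    by (simp add: coin_eq[symmetric])
  then show ?thesis
    by (simp add: C.emeasure_eq_measure prod_nonneg pr_def)
qed

lemma stepv_inj: "stepv a y = stepv b y \<longleftrightarrow> a = b"
  by (auto simp: stepv_def)

lemma hist_Suc_eq:
  assumes "walk_hist \<xi>0 0 (Suc m) = l"
  shows "walk_hist \<xi> 0 (Suc m) = l \<longleftrightarrow>
     walk_hist \<xi> 0 m = walk_hist \<xi>0 0 m \<and> \<xi> (keyL (walk_hist \<xi>0 0 m)) = \<xi>0 (keyL (walk_hist \<xi>0 0 m))"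
proof
  assume h: "walk_hist \<xi> 0 (Suc m) = l"
  then have "walk_hist \<xi> 0 m @ [stepv (\<xi> (keyL (walk_hist \<xi> 0 m))) (last (walk_hist \<xi> 0 m))]
     = walk_hist \<xi>0 0 m @ [stepv (\<xi>0 (keyL (walk_hist \<xi>0 0 m))) (last (walk_hist \<xi>0 0 m))]"
    using assms by (simp add: hist_Suc del: last_hist)
  then have hm: "walk_hist \<xi> 0 m = walk_hist \<xi>0 0 m" and
    st: "stepv (\<xi> (keyL (walk_hist \<xi> 0 m))) (last (walk_hist \<xi> 0 m)) = stepv (\<xi>0 (keyL (walk_hist \<xi>0 0 m))) (last (walk_hist \<xi>0 0 m))"
    unfolding append1_eq_conv by blast+
  from st have "\<xi> (keyL (walk_hist \<xi>0 0 m)) = \<xi>0 (keyL (walk_hist \<xi>0 0 m))"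
    unfolding hm stepv_inj .
  then show "walk_hist \<xi> 0 m = walk_hist \<xi>0 0 m \<and> \<xi> (keyL (walk_hist \<xi>0 0 m)) = \<xi>0 (keyL (walk_hist \<xi>0 0 m))"
    using hm by simp
next
  assume "walk_hist \<xi> 0 m = walk_hist \<xi>0 0 m \<and> \<xi> (keyL (walk_hist \<xi>0 0 m)) = \<xi>0 (keyL (walk_hist \<xi>0 0 m))"
  then show "walk_hist \<xi> 0 (Suc m) = l" using assms by (simp add: hist_Suc del: last_hist)
qed

lemma usedL_mono_Suc: "usedL (walk_hist \<xi> 0 (Suc m)) = insert (keyL (walk_hist \<xi> 0 m)) (usedL (walk_hist \<xi> 0 m))"
  by (simp add: hist_Suc usedL_snoc)

lemma hist_cyl:
  "finite S \<Longrightarrow> S \<inter> usedL l = {} \<Longrightarrow>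
   measure (coin_space \<omega>) {\<xi>. walk_hist \<xi> 0 m = l \<and> (\<forall>j\<in>S. \<xi> j = \<beta> j)}
   = measure (coin_space \<omega>) {\<xi>. walk_hist \<xi> 0 m = l} * (\<Prod>j\<in>S. pr \<omega> j (\<beta> j))"
proof (induction m arbitrary: l S \<beta>)
  case 0
  interpret C: prob_space "coin_space \<omega>" by (rule ps)
  show ?case
  proof (cases "l = [0]")
    case True
    have "measure (coin_space \<omega>) {\<xi>. True} = 1"
      using C.prob_space by simp
    then show ?thesis using cyl_prob[OF 0(1)] True by simp
  next
    case False
    then show ?thesis by auto
  qed
next
  case (Suc m)
  show ?case
  proof (cases "\<exists>\<xi>. walk_hist \<xi> 0 (Suc m) = l")
    case False
    then show ?thesis by simp
  next
    case True
    then obtain \<xi>0 where h0: "walk_hist \<xi>0 0 (Suc m) = l" by blast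
    define l0 where "l0 = walk_hist \<xi>0 0 m"
    define k where "k = keyL l0"
    define b0 where "b0 = \<xi>0 k"
    have eq: "\<And>\<xi>. walk_hist \<xi> 0 (Suc m) = l \<longleftrightarrow> walk_hist \<xi> 0 m = l0 \<and> \<xi> k = b0"
      using hist_Suc_eq[OF h0] by (simp add: l0_def k_def b0_def)
    have ul: "usedL l = insert k (usedL l0)"
      using usedL_mono_Suc[of \<xi>0 m] h0 by (simp add: l0_def k_def)
    have kS: "k \<notin> S" using Suc.prems(2) ul by auto
    have kf: "k \<notin> usedL l0" unfolding k_def l0_def by (rule key_fresh)
    have S2: "insert k S \<inter> usedL l0 = {}" using Suc.prems(2) ul kf by auto
    have A: "{\<xi>. walk_hist \<xi> 0 (Suc m) = l \<and> (\<forall>j\<in>S. \<xi> j = \<beta> j)}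
       = {\<xi>. walk_hist \<xi> 0 m = l0 \<and> (\<forall>j\<in>insert k S. \<xi> j = (\<beta>(k := b0)) j)}"
      using kS by (auto simp: eq)
    have B: "{\<xi>. walk_hist \<xi> 0 (Suc m) = l} = {\<xi>. walk_hist \<xi> 0 m = l0 \<and> (\<forall>j\<in>{k}. \<xi> j = (\<lambda>_. b0) j)}"
      by (auto simp: eq)
    have IH1: "measure (coin_space \<omega>) {\<xi>. walk_hist \<xi> 0 m = l0 \<and> (\<forall>j\<in>insert k S. \<xi> j = (\<beta>(k := b0)) j)}
       = measure (coin_space \<omega>) {\<xi>. walk_hist \<xi> 0 m = l0} * (\<Prod>j\<in>insert k S. pr \<omega> j ((\<beta>(k := b0)) j))"
      by (rule Suc.IH[of "insert k S" l0 "\<beta>(k := b0)"]) (use Suc.prems(1) S2 in auto)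
    have IH2: "measure (coin_space \<omega>) {\<xi>. walk_hist \<xi> 0 m = l0 \<and> (\<forall>j\<in>{k}. \<xi> j = (\<lambda>_. b0) j)}
       = measure (coin_space \<omega>) {\<xi>. walk_hist \<xi> 0 m = l0} * (\<Prod>j\<in>{k}. pr \<omega> j b0)"
      by (rule Suc.IH[of "{k}" l0 "\<lambda>_. b0"]) (use kf in auto)
    have P: "(\<Prod>j\<in>insert k S. pr \<omega> j ((\<beta>(k := b0)) j)) = pr \<omega> k b0 * (\<Prod>j\<in>S. pr \<omega> j (\<beta> j))"
    proof -
      have "(\<Prod>j\<in>S. pr \<omega> j ((\<beta>(k := b0)) j)) = (\<Prod>j\<in>S. pr \<omega> j (\<beta> j))"
        using kS by (intro prod.cong refl) auto
      moreover have "(\<Prod>j\<in>insert k S. pr \<omega> j ((\<beta>(k := b0)) j)) = pr \<omega> k ((\<beta>(k := b0)) k) * (\<Prod>j\<in>S. pr \<omega> j ((\<beta>(k := b0)) j))"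
        by (rule prod.insert[OF Suc.prems(1) kS])
      ultimately show ?thesis by simp
    qed
    show ?thesis
      unfolding A B IH1 IH2 P by simp
  qed
qed

lemma key_hist_sets: "{\<xi>. walk_hist \<xi> 0 m = l \<and> \<xi> k = b} \<in> sets (coin_space \<omega>)"
proof -
  have "{\<xi>. \<xi> k = b} \<in> sets (coin_space \<omega>)"
  proof -
    have "(\<lambda>\<xi>. \<xi> k) -` {b} \<inter> space (coin_space \<omega>) \<in> sets (coin_space \<omega>)"
      by (rule measurable_sets[OF comp_meas]) simp
    then show ?thesis by (simp add: vimage_def)
  qed
  moreover have "{\<xi>. walk_hist \<xi> 0 m = l} \<in> sets (coin_space \<omega>)" by (rule fun_hist_sets)
  ultimately have "{\<xi>. walk_hist \<xi> 0 m = l} \<inter> {\<xi>. \<xi> k = b} \<in> sets (coin_space \<omega>)" by blast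
  then show ?thesis by (simp add: Collect_conj_eq)
qed

lemma int_ind: "A \<in> sets (coin_space \<omega>) \<Longrightarrow> integrable (coin_space \<omega>) (\<lambda>\<xi>. c * indicator A \<xi> :: real)"
proof -
  interpret C: prob_space "coin_space \<omega>" by (rule ps)
  assume "A \<in> sets (coin_space \<omega>)"
  then show ?thesis by (intro integrable_mult_right) (simp add: integrable_indicator_iff C.emeasure_eq_measure)
qed

lemma hist_eq_sets: "{\<xi>. walk_hist \<xi> 0 m = l} \<in> sets (coin_space \<omega>)"
  using fun_hist_sets[of "\<lambda>h. h = l" 0 m \<omega>] by simp

lemma dis:
  fixes G :: "int list \<Rightarrow> real"
  shows "(\<integral>\<xi>. G (walk_hist \<xi> 0 m) \<partial>coin_space \<omega>) =
    (\<Sum>l\<in>range (\<lambda>\<xi>. walk_hist \<xi> 0 m). G l * measure (coin_space \<omega>) {\<xi>. walk_hist \<xi> 0 m = l})"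
proof -
  interpret C: prob_space "coin_space \<omega>" by (rule ps)
  let ?L = "range (\<lambda>\<xi>. walk_hist \<xi> 0 m)"
  have pw: "G (walk_hist \<xi> 0 m) = (\<Sum>l\<in>?L. G l * indicator {\<xi>. walk_hist \<xi> 0 m = l} \<xi>)" for \<xi>
  proof -
    have "(\<Sum>l\<in>?L. G l * indicator {\<xi>. walk_hist \<xi> 0 m = l} \<xi>) = (\<Sum>l\<in>?L. if l = walk_hist \<xi> 0 m then G l else 0)"
      by (intro sum.cong) (auto simp: indicator_def)
    also have "\<dots> = G (walk_hist \<xi> 0 m)"
      using hist_range_finite by (subst sum.delta) auto
    finally show ?thesis by simp
  qed
  have "(\<integral>\<xi>. G (walk_hist \<xi> 0 m) \<partial>coin_space \<omega>) = (\<integral>\<xi>. (\<Sum>l\<in>?L. G l * indicator {\<xi>. walk_hist \<xi> 0 m = l} \<xi>) \<partial>coin_space \<omega>)"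
    by (simp only: pw[symmetric])
  also have "\<dots> = (\<Sum>l\<in>?L. (\<integral>\<xi>. G l * indicator {\<xi>. walk_hist \<xi> 0 m = l} \<xi> \<partial>coin_space \<omega>))"
    by (intro Bochner_Integration.integral_sum int_ind hist_eq_sets)
  also have "\<dots> = (\<Sum>l\<in>?L. G l * measure (coin_space \<omega>) {\<xi>. walk_hist \<xi> 0 m = l})"
    by simp
  finally show ?thesis .
qed

lemma one_step:
  fixes F :: "int list \<Rightarrow> bool \<Rightarrow> real"
  shows "(\<integral>\<xi>. F (walk_hist \<xi> 0 m) (\<xi> (keyL (walk_hist \<xi> 0 m))) \<partial>coin_space \<omega>) =
    (\<integral>\<xi>. pr \<omega> (keyL (walk_hist \<xi> 0 m)) True * F (walk_hist \<xi> 0 m) True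
        + pr \<omega> (keyL (walk_hist \<xi> 0 m)) False * F (walk_hist \<xi> 0 m) False \<partial>coin_space \<omega>)"
proof -
  interpret C: prob_space "coin_space \<omega>" by (rule ps)
  let ?L = "range (\<lambda>\<xi>. walk_hist \<xi> 0 m)"
  let ?A = "\<lambda>l b. {\<xi>. walk_hist \<xi> 0 m = l \<and> \<xi> (keyL l) = b}"
  have pw: "F (walk_hist \<xi> 0 m) (\<xi> (keyL (walk_hist \<xi> 0 m))) =
      (\<Sum>l\<in>?L. \<Sum>b\<in>UNIV. F l b * indicator (?A l b) \<xi>)" for \<xi>
  proof -
    have i: "(\<Sum>b\<in>UNIV. F l b * indicator (?A l b) \<xi>) = (if l = walk_hist \<xi> 0 m then F l (\<xi> (keyL l)) else 0)" for l
      by (cases "\<xi> (keyL l)") (auto simp: UNIV_bool indicator_def)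
    show ?thesis unfolding i
      using hist_range_finite by (subst sum.delta) auto
  qed
  have "(\<integral>\<xi>. F (walk_hist \<xi> 0 m) (\<xi> (keyL (walk_hist \<xi> 0 m))) \<partial>coin_space \<omega>) =
     (\<integral>\<xi>. (\<Sum>l\<in>?L. \<Sum>b\<in>UNIV. F l b * indicator (?A l b) \<xi>) \<partial>coin_space \<omega>)"
    by (simp only: pw[symmetric])
  also have "\<dots> = (\<Sum>l\<in>?L. \<Sum>b\<in>UNIV. (\<integral>\<xi>. F l b * indicator (?A l b) \<xi> \<partial>coin_space \<omega>))"
  proof -
    have i1: "integrable (coin_space \<omega>) (\<lambda>\<xi>. F l b * indicator (?A l b) \<xi>)" for l b
      by (rule int_ind[OF key_hist_sets])
    have "(\<integral>\<xi>. (\<Sum>l\<in>?L. \<Sum>b\<in>UNIV. F l b * indicator (?A l b) \<xi>) \<partial>coin_space \<omega>)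
       = (\<Sum>l\<in>?L. (\<integral>\<xi>. (\<Sum>b\<in>UNIV. F l b * indicator (?A l b) \<xi>) \<partial>coin_space \<omega>))"
      by (intro Bochner_Integration.integral_sum Bochner_Integration.integrable_sum i1)
    also have "\<dots> = (\<Sum>l\<in>?L. \<Sum>b\<in>UNIV. (\<integral>\<xi>. F l b * indicator (?A l b) \<xi> \<partial>coin_space \<omega>))"
      by (intro sum.cong refl Bochner_Integration.integral_sum i1)
    finally show ?thesis .
  qed
  also have "\<dots> = (\<Sum>l\<in>?L. \<Sum>b\<in>UNIV. F l b * measure (coin_space \<omega>) (?A l b))"
    by simp
  also have "\<dots> = (\<Sum>l\<in>?L. (pr \<omega> (keyL l) True * F l True + pr \<omega> (keyL l) False * F l False)
                    * measure (coin_space \<omega>) {\<xi>. walk_hist \<xi> 0 m = l})"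
  proof (intro sum.cong refl)
    fix l assume "l \<in> ?L"
    then obtain \<xi>0 where l: "l = walk_hist \<xi>0 0 m" by auto
    have fr: "{keyL l} \<inter> usedL l = {}" using key_fresh[of \<xi>0 0 m] l by auto
    have "measure (coin_space \<omega>) (?A l b) = measure (coin_space \<omega>) {\<xi>. walk_hist \<xi> 0 m = l} * pr \<omega> (keyL l) b" for b
      using hist_cyl[OF _ fr, of \<omega> m "\<lambda>_. b"] by simp
    then show "(\<Sum>b\<in>UNIV. F l b * measure (coin_space \<omega>) (?A l b)) =
      (pr \<omega> (keyL l) True * F l True + pr \<omega> (keyL l) False * F l False) * measure (coin_space \<omega>) {\<xi>. walk_hist \<xi> 0 m = l}"
      by (simp add: UNIV_bool algebra_simps)
  qed
  also have "\<dots> = (\<integral>\<xi>. pr \<omega> (keyL (walk_hist \<xi> 0 m)) True * F (walk_hist \<xi> 0 m) True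
        + pr \<omega> (keyL (walk_hist \<xi> 0 m)) False * F (walk_hist \<xi> 0 m) False \<partial>coin_space \<omega>)"
    by (rule dis[symmetric])
  finally show ?thesis .
qed

locale cookie =
  fixes \<omega> :: "int \<Rightarrow> nat \<Rightarrow> real"
  assumes om: "\<omega> \<in> Omega_plus"
begin

lemma om_bounds: "1 \<le> i \<Longrightarrow> 1/2 \<le> \<omega> z i \<and> \<omega> z i \<le> 1"
  using om by (simp add: Omega_plus_def)

definition pw :: "int list \<Rightarrow> real" where
  "pw l = \<omega> (fst (keyL l)) (snd (keyL l))"

lemma pw_bounds: "1/2 \<le> pw (walk_hist \<xi> 0 m) \<and> pw (walk_hist \<xi> 0 m) \<le> 1"
  unfolding pw_def keyL_hist using om_bounds count_X_pos by simp

lemma pr_key_T: "pr \<omega> (keyL (walk_hist \<xi> 0 m)) True = pw (walk_hist \<xi> 0 m)"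
  using pw_bounds[of \<xi> m] unfolding pr_def pw_def by simp

lemma pr_key_F: "pr \<omega> (keyL (walk_hist \<xi> 0 m)) False = 1 - pw (walk_hist \<xi> 0 m)"
  using pw_bounds[of \<xi> m] unfolding pr_def pw_def by simp

lemma step_eq: "X \<xi> 0 (Suc m) - X \<xi> 0 m = (if \<xi> (keyL (walk_hist \<xi> 0 m)) then 1 else -1)"
  by (simp add: X_Suc stepv_def)

lemma step_eq_real: "real_of_int (X \<xi> 0 (Suc m)) - real_of_int (X \<xi> 0 m) = (if \<xi> (keyL (walk_hist \<xi> 0 m)) then 1 else -1)"
  using step_eq[of \<xi> m] by (cases "\<xi> (keyL (walk_hist \<xi> 0 m))") simp_all

lemma step_True: "\<xi> (keyL (walk_hist \<xi> 0 m)) \<longleftrightarrow> X \<xi> 0 (Suc m) = X \<xi> 0 m + 1"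
  by (simp add: X_Suc stepv_def)

lemma butlast_hist: "butlast (walk_hist \<xi> x (Suc n)) = walk_hist \<xi> x n"
  by (simp add: hist_snoc)

lemma int_step:
  fixes H :: "int list \<Rightarrow> int \<Rightarrow> real"
  shows "integrable (coin_space \<omega>) (\<lambda>\<xi>. H (walk_hist \<xi> 0 m) (X \<xi> 0 (Suc m)))"
  using fun_hist_integrable[where F="\<lambda>l. H (butlast l) (last l)" and \<omega>=\<omega> and x=0 and n="Suc m"]
  by (simp add: butlast_hist)

lemma int_hist:
  fixes H :: "int list \<Rightarrow> real"
  shows "integrable (coin_space \<omega>) (\<lambda>\<xi>. H (walk_hist \<xi> 0 m))"
  by (rule fun_hist_integrable)

lemma mart:
  fixes H :: "int list \<Rightarrow> real"
  shows "(\<integral>\<xi>. H (walk_hist \<xi> 0 m) * (X \<xi> 0 (Suc m) - X \<xi> 0 m) \<partial>coin_space \<omega>)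
       = (\<integral>\<xi>. H (walk_hist \<xi> 0 m) * (2 * pw (walk_hist \<xi> 0 m) - 1) \<partial>coin_space \<omega>)"
proof -
  have "(\<integral>\<xi>. H (walk_hist \<xi> 0 m) * (X \<xi> 0 (Suc m) - X \<xi> 0 m) \<partial>coin_space \<omega>)
     = (\<integral>\<xi>. (\<lambda>l b. H l * (if b then 1 else -1)) (walk_hist \<xi> 0 m) (\<xi> (keyL (walk_hist \<xi> 0 m))) \<partial>coin_space \<omega>)"
    by (simp add: step_eq_real)
  also have "\<dots> = (\<integral>\<xi>. pr \<omega> (keyL (walk_hist \<xi> 0 m)) True * (H (walk_hist \<xi> 0 m) * 1)
        + pr \<omega> (keyL (walk_hist \<xi> 0 m)) False * (H (walk_hist \<xi> 0 m) * -1) \<partial>coin_space \<omega>)"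
    using one_step[where F="\<lambda>l b. H l * (if b then 1 else -1)" and m=m and \<omega>=\<omega>] by simp
  also have "\<dots> = (\<integral>\<xi>. H (walk_hist \<xi> 0 m) * (2 * pw (walk_hist \<xi> 0 m) - 1) \<partial>coin_space \<omega>)"
    by (simp add: pr_key_T pr_key_F algebra_simps)
  finally show ?thesis .
qed

lemma mart_ind:
  fixes H :: "int list \<Rightarrow> real"
  shows "(\<integral>\<xi>. H (walk_hist \<xi> 0 m) * (if X \<xi> 0 (Suc m) = X \<xi> 0 m + 1 then 1 else 0) \<partial>coin_space \<omega>)
       = (\<integral>\<xi>. H (walk_hist \<xi> 0 m) * pw (walk_hist \<xi> 0 m) \<partial>coin_space \<omega>)"
proof -
  have "(\<integral>\<xi>. H (walk_hist \<xi> 0 m) * (if X \<xi> 0 (Suc m) = X \<xi> 0 m + 1 then 1 else 0) \<partial>coin_space \<omega>)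
     = (\<integral>\<xi>. (\<lambda>l b. H l * (if b then 1 else 0)) (walk_hist \<xi> 0 m) (\<xi> (keyL (walk_hist \<xi> 0 m))) \<partial>coin_space \<omega>)"
    by (simp add: step_True)
  also have "\<dots> = (\<integral>\<xi>. pr \<omega> (keyL (walk_hist \<xi> 0 m)) True * (H (walk_hist \<xi> 0 m) * 1)
        + pr \<omega> (keyL (walk_hist \<xi> 0 m)) False * (H (walk_hist \<xi> 0 m) * 0) \<partial>coin_space \<omega>)"
    using one_step[where F="\<lambda>l b. H l * (if b then 1 else 0)" and m=m and \<omega>=\<omega>] by simp
  also have "\<dots> = (\<integral>\<xi>. H (walk_hist \<xi> 0 m) * pw (walk_hist \<xi> 0 m) \<partial>coin_space \<omega>)"
    by (simp add: pr_key_T algebra_simps)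
  finally show ?thesis .
qed

lemma mart_sum:
  fixes H :: "nat \<Rightarrow> int list \<Rightarrow> real"
  shows "(\<integral>\<xi>. (\<Sum>m<n. H m (walk_hist \<xi> 0 m) * (X \<xi> 0 (Suc m) - X \<xi> 0 m)) \<partial>coin_space \<omega>)
       = (\<integral>\<xi>. (\<Sum>m<n. H m (walk_hist \<xi> 0 m) * (2 * pw (walk_hist \<xi> 0 m) - 1)) \<partial>coin_space \<omega>)"
proof -
  have i1: "integrable (coin_space \<omega>) (\<lambda>\<xi>. H m (walk_hist \<xi> 0 m) * (X \<xi> 0 (Suc m) - X \<xi> 0 m))" for m
    using int_step[of "\<lambda>l y. H m l * (y - last l)" m] by simp
  have i2: "integrable (coin_space \<omega>) (\<lambda>\<xi>. H m (walk_hist \<xi> 0 m) * (2 * pw (walk_hist \<xi> 0 m) - 1))" for m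
    by (rule int_hist)
  show ?thesis
    apply (subst Bochner_Integration.integral_sum[OF i1])
    apply (subst Bochner_Integration.integral_sum[OF i2])
    apply (rule sum.cong[OF refl])
    apply (rule mart)
    done
qed

lemma mart_ind_sum:
  fixes H :: "nat \<Rightarrow> int list \<Rightarrow> real"
  shows "(\<integral>\<xi>. (\<Sum>m<n. H m (walk_hist \<xi> 0 m) * (if X \<xi> 0 (Suc m) = X \<xi> 0 m + 1 then 1 else 0)) \<partial>coin_space \<omega>)
       = (\<integral>\<xi>. (\<Sum>m<n. H m (walk_hist \<xi> 0 m) * pw (walk_hist \<xi> 0 m)) \<partial>coin_space \<omega>)"
proof -
  have i1: "integrable (coin_space \<omega>) (\<lambda>\<xi>. H m (walk_hist \<xi> 0 m) * (if X \<xi> 0 (Suc m) = X \<xi> 0 m + 1 then 1 else 0))" for m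
    using int_step[of "\<lambda>l y. H m l * (if y = last l + 1 then 1 else 0)" m] by simp
  have i2: "integrable (coin_space \<omega>) (\<lambda>\<xi>. H m (walk_hist \<xi> 0 m) * pw (walk_hist \<xi> 0 m))" for m
    by (rule int_hist)
  show ?thesis
    apply (subst Bochner_Integration.integral_sum[OF i1])
    apply (subst Bochner_Integration.integral_sum[OF i2])
    apply (rule sum.cong[OF refl])
    apply (rule mart_ind)
    done
qed

end

lemma set_hist: "y \<in> set (walk_hist \<xi> 0 m) \<longleftrightarrow> (\<exists>k\<le>m. X \<xi> 0 k = y)"
proof -
  have "set (walk_hist \<xi> 0 m) = X \<xi> 0 ` {0..<Suc m}" by (simp only: hist_map set_map set_upt)
  also have "{0..<Suc m} = {..m}" by auto
  finally show ?thesis by auto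
qed

lemma hist_upt: "walk_hist \<xi> 0 m = map (X \<xi> 0) [0..<m] @ [X \<xi> 0 m]"
  by (simp add: hist_map)

lemma count_mono: "m \<le> n \<Longrightarrow> count_list (walk_hist \<xi> 0 m) y \<le> count_list (walk_hist \<xi> 0 n) y"
proof (induction n)
  case 0 then show ?case by simp
next
  case (Suc n)
  show ?case
  proof (cases "m = Suc n")
    case True then show ?thesis by simp
  next
    case False
    then have "m \<le> n" using Suc.prems by simp
    then show ?thesis using Suc.IH by (simp add: hist_snoc)
  qed
qed

lemma X_le_K:
  assumes "0 \<le> K" "\<forall>k<n. X \<xi> 0 k \<noteq> K"
  shows "X \<xi> 0 n \<le> K"
  using assms(2)
proof (induction n)
  case 0 then show ?case using assms(1) by simp
next
  case (Suc n)
  then have "X \<xi> 0 n \<le> K" "X \<xi> 0 n \<noteq> K" by auto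
  then show ?case using X_step[of \<xi> 0 n] by auto
qed

section \<open>Pointwise bounds\<close>

definition Ssum :: "int \<Rightarrow> (int \<times> nat \<Rightarrow> bool) \<Rightarrow> nat \<Rightarrow> int" where
  "Ssum K \<xi> n = (\<Sum>m<n. if K \<notin> set (walk_hist \<xi> 0 m) \<and> 0 \<le> X \<xi> 0 m then X \<xi> 0 (Suc m) - X \<xi> 0 m else 0)"

definition Vsum :: "int \<Rightarrow> (int \<times> nat \<Rightarrow> bool) \<Rightarrow> nat \<Rightarrow> int" where
  "Vsum K \<xi> n = (\<Sum>m<n. if K \<notin> set (walk_hist \<xi> 0 m) \<and> X \<xi> 0 m = 0 then 1 else 0)"

lemma SV_inv:
  assumes K: "0 \<le> K"
  shows "Ssum K \<xi> n \<le> K \<and>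
    ((\<forall>k<n. X \<xi> 0 k \<noteq> K) \<longrightarrow> Ssum K \<xi> n \<le> max 0 (X \<xi> 0 n) \<and> max 0 (X \<xi> 0 n) \<le> Ssum K \<xi> n + Vsum K \<xi> n) \<and>
    ((\<exists>k\<le>n. X \<xi> 0 k = K) \<longrightarrow> K \<le> Ssum K \<xi> n + Vsum K \<xi> n)"
proof (induction n)
  case 0
  then show ?case using K by (simp add: Ssum_def Vsum_def)
next
  case (Suc n)
  let ?a = "X \<xi> 0 n" and ?b = "X \<xi> 0 (Suc n)"
  have S1: "Ssum K \<xi> (Suc n) = Ssum K \<xi> n + (if K \<notin> set (walk_hist \<xi> 0 n) \<and> 0 \<le> ?a then ?b - ?a else 0)"
    by (simp add: Ssum_def)
  have V1: "Vsum K \<xi> (Suc n) = Vsum K \<xi> n + (if K \<notin> set (walk_hist \<xi> 0 n) \<and> ?a = 0 then 1 else 0)"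
    by (simp add: Vsum_def)
  have st: "?b = ?a + 1 \<or> ?b = ?a - 1" by (rule X_step)
  show ?case
  proof (cases "K \<in> set (walk_hist \<xi> 0 n)")
    case True
    then obtain k where k: "k \<le> n" "X \<xi> 0 k = K" by (auto simp: set_hist)
    then have "K \<le> Ssum K \<xi> n + Vsum K \<xi> n" using Suc.IH by blast
    moreover have "\<not> (\<forall>k<Suc n. X \<xi> 0 k \<noteq> K)" using k(2) le_imp_less_Suc[OF k(1)] by blast
    ultimately show ?thesis using S1 V1 True Suc.IH by auto
  next
    case False
    then have nk: "\<forall>k\<le>n. X \<xi> 0 k \<noteq> K" by (auto simp: set_hist)
    then have IH: "Ssum K \<xi> n \<le> max 0 ?a" "max 0 ?a \<le> Ssum K \<xi> n + Vsum K \<xi> n" using Suc.IH by auto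
    have aK: "?a \<le> K" using X_le_K[OF K, of n \<xi>] nk by auto
    then have aK': "?a < K" using nk by auto
    have bK: "?b \<le> K" using aK' st by auto
    have S2: "Ssum K \<xi> (Suc n) \<le> max 0 ?b"
      using S1 IH st False by (cases "0 \<le> ?a") auto
    have V2: "max 0 ?b \<le> Ssum K \<xi> (Suc n) + Vsum K \<xi> (Suc n)"
    proof (cases "?a = 0")
      case True then show ?thesis using S1 V1 IH st False by auto
    next
      case False
      show ?thesis
      proof (cases "0 < ?a")
        case True then show ?thesis using S1 V1 IH st \<open>K \<notin> set (walk_hist \<xi> 0 n)\<close> by auto
      next
        case False2: False
        then have "?a < 0" using False by auto
        then show ?thesis using S1 V1 IH st \<open>K \<notin> set (walk_hist \<xi> 0 n)\<close> by auto
      qed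
    qed
    have T: "(\<exists>k\<le>Suc n. X \<xi> 0 k = K) \<longrightarrow> ?b = K"
      using nk by (auto simp: le_Suc_eq)
    show ?thesis using S2 V2 T bK K by auto
  qed
qed

lemma S_le: "0 \<le> K \<Longrightarrow> Ssum K \<xi> n \<le> K"
  using SV_inv by blast

lemma SV_ge: "0 \<le> K \<Longrightarrow> K \<in> set (walk_hist \<xi> 0 n) \<Longrightarrow> K \<le> Ssum K \<xi> n + Vsum K \<xi> n"
  using SV_inv[of K \<xi> n] by (auto simp: set_hist)

definition Act :: "int \<Rightarrow> int \<Rightarrow> int list \<Rightarrow> bool" where
  "Act K M l = (\<forall>y\<in>set l. -M < y \<and> y < K)"

definition Asum :: "int \<Rightarrow> int \<Rightarrow> (int \<times> nat \<Rightarrow> bool) \<Rightarrow> nat \<Rightarrow> int" where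
  "Asum K M \<xi> n = (\<Sum>m<n. if Act K M (walk_hist \<xi> 0 m) then 1 else 0)"

definition Qsum :: "int \<Rightarrow> int \<Rightarrow> (int \<times> nat \<Rightarrow> bool) \<Rightarrow> nat \<Rightarrow> int" where
  "Qsum K M \<xi> n = (\<Sum>m<n. if Act K M (walk_hist \<xi> 0 m) then 2 * (X \<xi> 0 m + M) * (X \<xi> 0 (Suc m) - X \<xi> 0 m) + 1 else 0)"

definition Rsum :: "int \<Rightarrow> int \<Rightarrow> (int \<times> nat \<Rightarrow> bool) \<Rightarrow> nat \<Rightarrow> int" where
  "Rsum K M \<xi> n = (\<Sum>m<n. if Act K M (walk_hist \<xi> 0 m) then X \<xi> 0 (Suc m) - X \<xi> 0 m else 0)"

lemma in_hist: "k \<le> n \<Longrightarrow> X \<xi> 0 k \<in> set (walk_hist \<xi> 0 n)"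
  unfolding set_hist by blast

lemma ball_hist: "(\<forall>y\<in>set (walk_hist \<xi> 0 n). P y) \<longleftrightarrow> (\<forall>k\<le>n. P (X \<xi> 0 k))"
proof
  assume "\<forall>y\<in>set (walk_hist \<xi> 0 n). P y" then show "\<forall>k\<le>n. P (X \<xi> 0 k)" using in_hist by blast
next
  assume "\<forall>k\<le>n. P (X \<xi> 0 k)" then show "\<forall>y\<in>set (walk_hist \<xi> 0 n). P y" by (auto simp: set_hist)
qed

lemma Act_hist: "Act K M (walk_hist \<xi> 0 n) \<longleftrightarrow> (\<forall>k\<le>n. -M < X \<xi> 0 k \<and> X \<xi> 0 k < K)"
  unfolding Act_def by (rule ball_hist)

lemma Q_inv:
  assumes K: "0 \<le> K" and M: "0 \<le> M"
  shows "Qsum K M \<xi> n \<le> (K + M)^2 \<and>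
    ((\<forall>k<n. -M < X \<xi> 0 k \<and> X \<xi> 0 k < K) \<longrightarrow>
       Qsum K M \<xi> n = (X \<xi> 0 n + M)^2 - M^2 \<and> -M \<le> X \<xi> 0 n \<and> X \<xi> 0 n \<le> K)"
proof (induction n)
  case 0 then show ?case using K M by (simp add: Qsum_def)
next
  case (Suc n)
  let ?a = "X \<xi> 0 n" and ?b = "X \<xi> 0 (Suc n)"
  have Q1: "Qsum K M \<xi> (Suc n) = Qsum K M \<xi> n + (if Act K M (walk_hist \<xi> 0 n) then 2 * (?a + M) * (?b - ?a) + 1 else 0)"
    by (simp add: Qsum_def)
  have st: "?b = ?a + 1 \<or> ?b = ?a - 1" by (rule X_step)
  show ?case
  proof (cases "Act K M (walk_hist \<xi> 0 n)")
    case True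
    then have all: "\<forall>k\<le>n. -M < X \<xi> 0 k \<and> X \<xi> 0 k < K" by (simp add: Act_hist)
    then have IH: "Qsum K M \<xi> n = (?a + M)^2 - M^2" using Suc.IH by auto
    have a: "-M < ?a" "?a < K" using all by auto
    have sq: "(?b - ?a)^2 = 1" using st by auto
    have id: "(?b + M)^2 = (?a + M)^2 + 2 * (?a + M) * (?b - ?a) + (?b - ?a)^2"
      by (simp add: power2_eq_square algebra_simps)
    have Q1': "Qsum K M \<xi> (Suc n) = Qsum K M \<xi> n + 2 * (?a + M) * (?b - ?a) + 1"
      using Q1 True by simp
    have eq: "Qsum K M \<xi> (Suc n) = (?b + M)^2 - M^2"
      using Q1' IH sq id by linarith
    have b: "-M \<le> ?b" "?b \<le> K" using a st by auto
    have "(?b + M)^2 \<le> (K + M)^2" using b by (intro power_mono) auto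
    then have "Qsum K M \<xi> (Suc n) \<le> (K + M)^2" using eq zero_le_power2[of M] by linarith
    then show ?thesis using eq b by auto
  next
    case False
    then have "\<not> (\<forall>k<Suc n. -M < X \<xi> 0 k \<and> X \<xi> 0 k < K)" by (auto simp: Act_hist less_Suc_eq_le)
    then show ?thesis using Q1 False Suc.IH by auto
  qed
qed

lemma Q_le: "0 \<le> K \<Longrightarrow> 0 \<le> M \<Longrightarrow> Qsum K M \<xi> n \<le> (K + M)^2"
  using Q_inv by blast

lemma R_inv:
  assumes K: "0 \<le> K" and M: "0 \<le> M"
  shows "((\<forall>k<n. -M < X \<xi> 0 k \<and> X \<xi> 0 k < K) \<longrightarrow> Rsum K M \<xi> n = X \<xi> 0 n \<and> -M \<le> X \<xi> 0 n \<and> X \<xi> 0 n \<le> K) \<and>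
    (\<not> (\<forall>k<n. -M < X \<xi> 0 k \<and> X \<xi> 0 k < K) \<longrightarrow> Rsum K M \<xi> n = -M \<or> (Rsum K M \<xi> n = K \<and> K \<in> set (walk_hist \<xi> 0 n)))"
proof (induction n)
  case 0 then show ?case using K M by (simp add: Rsum_def)
next
  case (Suc n)
  let ?a = "X \<xi> 0 n" and ?b = "X \<xi> 0 (Suc n)"
  have R1: "Rsum K M \<xi> (Suc n) = Rsum K M \<xi> n + (if Act K M (walk_hist \<xi> 0 n) then ?b - ?a else 0)"
    by (simp add: Rsum_def)
  have st: "?b = ?a + 1 \<or> ?b = ?a - 1" by (rule X_step)
  have setmono: "K \<in> set (walk_hist \<xi> 0 n) \<Longrightarrow> K \<in> set (walk_hist \<xi> 0 (Suc n))"
    by (simp add: hist_snoc)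
  have aset: "?a \<in> set (walk_hist \<xi> 0 (Suc n))" unfolding set_hist by (rule exI[of _ n]) simp
  show ?case
  proof (cases "Act K M (walk_hist \<xi> 0 n)")
    case True
    then have all: "\<forall>k\<le>n. -M < X \<xi> 0 k \<and> X \<xi> 0 k < K" by (simp add: Act_hist)
    then have IH: "Rsum K M \<xi> n = ?a" using Suc.IH by auto
    have all': "\<forall>k<Suc n. -M < X \<xi> 0 k \<and> X \<xi> 0 k < K" using all by (auto simp: less_Suc_eq_le)
    have "-M < ?a" "?a < K" using all by auto
    then show ?thesis using R1 True IH st all' by auto
  next
    case False
    show ?thesis
    proof (cases "\<forall>k<n. -M < X \<xi> 0 k \<and> X \<xi> 0 k < K")
      case True
      then have IH: "Rsum K M \<xi> n = ?a" "-M \<le> ?a" "?a \<le> K" using Suc.IH by auto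
      have "\<not> (\<forall>k\<le>n. -M < X \<xi> 0 k \<and> X \<xi> 0 k < K)" using False by (simp add: Act_hist)
      then obtain k where k: "k \<le> n" "\<not> (-M < X \<xi> 0 k \<and> X \<xi> 0 k < K)" by blast
      then have "k = n" using True by (cases "k < n") auto
      then have "\<not> (-M < ?a \<and> ?a < K)" using k by simp
      then have "?a = -M \<or> ?a = K" using IH by auto
      moreover have "\<not> (\<forall>k<Suc n. -M < X \<xi> 0 k \<and> X \<xi> 0 k < K)" using False by (auto simp: Act_hist less_Suc_eq_le)
      ultimately show ?thesis using R1 False IH aset by auto
    next
      case False2: False
      then have "\<not> (\<forall>k<Suc n. -M < X \<xi> 0 k \<and> X \<xi> 0 k < K)" using less_SucI by blast
      then show ?thesis using R1 False Suc.IH False2 setmono by auto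
    qed
  qed
qed

lemma R_le:
  assumes K: "0 \<le> K" and M: "0 \<le> M"
  shows "Rsum K M \<xi> n \<le> (if K \<in> set (walk_hist \<xi> 0 n) then K else 0) + (if Act K M (walk_hist \<xi> 0 n) then K else 0)
      - (if \<not> Act K M (walk_hist \<xi> 0 n) \<and> K \<notin> set (walk_hist \<xi> 0 n) then M else 0)"
proof (cases "\<forall>k<n. -M < X \<xi> 0 k \<and> X \<xi> 0 k < K")
  case True
  then have R: "Rsum K M \<xi> n = X \<xi> 0 n" "-M \<le> X \<xi> 0 n" "X \<xi> 0 n \<le> K" using R_inv[OF K M, of n \<xi>] by auto
  have xin: "X \<xi> 0 n \<in> set (walk_hist \<xi> 0 n)" by (simp add: hist_upt)
  show ?thesis
  proof (cases "Act K M (walk_hist \<xi> 0 n)")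
    case True
    then show ?thesis using R K M by (auto simp: Act_def)
  next
    case False
    have "\<not> (\<forall>k\<le>n. -M < X \<xi> 0 k \<and> X \<xi> 0 k < K)" using False by (simp add: Act_hist)
    then obtain k where k: "k \<le> n" "\<not> (-M < X \<xi> 0 k \<and> X \<xi> 0 k < K)" by blast
    then have "k = n" using True by (cases "k < n") auto
    then have "\<not> (-M < X \<xi> 0 n \<and> X \<xi> 0 n < K)" using k by simp
    then have "X \<xi> 0 n = -M \<or> X \<xi> 0 n = K" using R by auto
    moreover have "K \<in> set (walk_hist \<xi> 0 n) \<Longrightarrow> X \<xi> 0 n = K"
      using True by (auto simp: set_hist le_less)
    ultimately show ?thesis using R False xin K M by auto
  qed
next
  case False
  then have "Rsum K M \<xi> n = -M \<or> (Rsum K M \<xi> n = K \<and> K \<in> set (walk_hist \<xi> 0 n))"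
    using R_inv[OF K M, of n \<xi>] by auto
  moreover have "\<not> Act K M (walk_hist \<xi> 0 n)"
  proof -
    from False obtain k where "k < n" "\<not> (-M < X \<xi> 0 k \<and> X \<xi> 0 k < K)" by blast
    then show ?thesis unfolding Act_hist using less_imp_le by blast
  qed
  ultimately show ?thesis using K M by auto
qed

lemma A_ge:
  assumes "Act K M (walk_hist \<xi> 0 n)"
  shows "int (Suc n) \<le> Asum K M \<xi> (Suc n)"
proof -
  have "\<forall>m<Suc n. Act K M (walk_hist \<xi> 0 m)" using assms by (auto simp: Act_hist)
  then have "Asum K M \<xi> (Suc n) = (\<Sum>m<Suc n. 1)" unfolding Asum_def by (intro sum.cong) auto
  then show ?thesis by simp
qed

lemma A_nonneg: "0 \<le> Asum K M \<xi> n"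
  unfolding Asum_def by (intro sum_nonneg) auto

definition HI :: "int \<Rightarrow> nat \<Rightarrow> int list \<Rightarrow> bool" where
  "HI K j l = (K \<notin> set l \<and> j \<le> count_list l 0)"

definition Usum :: "int \<Rightarrow> nat \<Rightarrow> (int \<times> nat \<Rightarrow> bool) \<Rightarrow> nat \<Rightarrow> int" where
  "Usum K j \<xi> n = (\<Sum>m<n. if HI K j (walk_hist \<xi> 0 m) then
      (if 1 \<le> X \<xi> 0 m then X \<xi> 0 (Suc m) - X \<xi> 0 m else 0) +
      (if X \<xi> 0 m = 0 \<and> X \<xi> 0 (Suc m) = X \<xi> 0 m + 1 then 1 else 0) else 0)"

definition Wsum :: "int \<Rightarrow> nat \<Rightarrow> (int \<times> nat \<Rightarrow> bool) \<Rightarrow> nat \<Rightarrow> int" where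
  "Wsum K j \<xi> n = (\<Sum>m<n. if HI K j (walk_hist \<xi> 0 m) \<and> X \<xi> 0 m = 0 then 1 else 0)"

lemma U_inv:
  assumes K: "0 \<le> K"
  shows "Usum K j \<xi> n \<le> (if \<exists>m<n. HI K j (walk_hist \<xi> 0 m) then K else 0) \<and>
    ((\<not> (\<exists>m<n. HI K j (walk_hist \<xi> 0 m))) \<longrightarrow> Usum K j \<xi> n = 0) \<and>
    ((\<forall>k\<le>n. X \<xi> 0 k \<noteq> K) \<longrightarrow> Usum K j \<xi> n \<le> max 0 (X \<xi> 0 n))"
proof (induction n)
  case 0 then show ?case by (simp add: Usum_def)
next
  case (Suc n)
  let ?a = "X \<xi> 0 n" and ?b = "X \<xi> 0 (Suc n)"
  let ?t = "(if 1 \<le> ?a then ?b - ?a else 0) + (if ?a = 0 \<and> ?b = ?a + 1 then 1 else 0)"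
  have U1: "Usum K j \<xi> (Suc n) = Usum K j \<xi> n + (if HI K j (walk_hist \<xi> 0 n) then ?t else 0)"
    by (simp add: Usum_def)
  have st: "?b = ?a + 1 \<or> ?b = ?a - 1" by (rule X_step)
  have ex: "(\<exists>m<Suc n. HI K j (walk_hist \<xi> 0 m)) \<longleftrightarrow> (\<exists>m<n. HI K j (walk_hist \<xi> 0 m)) \<or> HI K j (walk_hist \<xi> 0 n)"
    by (auto simp: less_Suc_eq)
  show ?case
  proof (cases "HI K j (walk_hist \<xi> 0 n)")
    case True
    then have nK: "\<forall>k\<le>n. X \<xi> 0 k \<noteq> K" by (auto simp: HI_def set_hist)
    then have IH: "Usum K j \<xi> n \<le> max 0 ?a" using Suc.IH by auto
    have aK: "?a < K" using X_le_K[OF K, of n \<xi>] nK by force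
    have bK: "?b \<le> K" using aK st by auto
    have new: "Usum K j \<xi> (Suc n) \<le> max 0 ?b"
      using U1 True IH st by (cases "1 \<le> ?a"; cases "?a = 0") auto
    show ?thesis using new bK K ex True by auto
  next
    case False
    have A: "Usum K j \<xi> (Suc n) = Usum K j \<xi> n" using U1 False by simp
    have C: "(\<forall>k\<le>Suc n. X \<xi> 0 k \<noteq> K) \<longrightarrow> \<not> (\<exists>m<n. HI K j (walk_hist \<xi> 0 m))"
    proof (intro impI notI)
      assume nk: "\<forall>k\<le>Suc n. X \<xi> 0 k \<noteq> K" and "\<exists>m<n. HI K j (walk_hist \<xi> 0 m)"
      then obtain m where m: "m < n" "HI K j (walk_hist \<xi> 0 m)" by blast
      have "j \<le> count_list (walk_hist \<xi> 0 n) 0"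
        using m count_mono[of m n \<xi> 0] by (auto simp: HI_def)
      moreover have "K \<notin> set (walk_hist \<xi> 0 n)" using nk by (auto simp: set_hist)
      ultimately show False using False by (simp add: HI_def)
    qed
    show ?thesis using A C Suc.IH ex False K by auto
  qed
qed

lemma U_le: "0 \<le> K \<Longrightarrow> Usum K j \<xi> n \<le> (if \<exists>m. j \<le> count_list (walk_hist \<xi> 0 m) 0 then K else 0)"
  using U_inv[of K j \<xi> n] by (auto simp: HI_def split: if_splits)

lemma visits_small:
  assumes j: "1 \<le> j"
  shows "(\<Sum>m<n. if X \<xi> 0 m = 0 \<and> count_list (walk_hist \<xi> 0 m) 0 < j then 1 else 0 :: int)
     \<le> min (int j - 1) (int (count_list (map (X \<xi> 0) [0..<n]) 0))"
proof (induction n)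
  case 0 then show ?case using j by simp
next
  case (Suc n)
  have c: "count_list (walk_hist \<xi> 0 n) 0 = count_list (map (X \<xi> 0) [0..<n]) 0 + (if X \<xi> 0 n = 0 then 1 else 0)"
    by (simp add: hist_upt)
  show ?case using Suc c by auto
qed

lemma V_le_W: "1 \<le> j \<Longrightarrow> Vsum K \<xi> n \<le> int j - 1 + Wsum K j \<xi> n"
proof -
  assume j: "1 \<le> j"
  have "Vsum K \<xi> n \<le> (\<Sum>m<n. (if X \<xi> 0 m = 0 \<and> count_list (walk_hist \<xi> 0 m) 0 < j then 1 else 0)
     + (if HI K j (walk_hist \<xi> 0 m) \<and> X \<xi> 0 m = 0 then 1 else 0))"
    unfolding Vsum_def by (intro sum_mono) (insert j, auto simp: HI_def)
  also have "\<dots> = (\<Sum>m<n. if X \<xi> 0 m = 0 \<and> count_list (walk_hist \<xi> 0 m) 0 < j then 1 else 0) + Wsum K j \<xi> n"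
    by (simp add: sum.distrib Wsum_def)
  also have "\<dots> \<le> int j - 1 + Wsum K j \<xi> n" using visits_small[OF j, where \<xi>=\<xi> and n=n] by linarith
  finally show ?thesis .
qed

section \<open>The D_plus identity\<close>

lemma card_visits: "card {k. k < n \<and> X \<xi> 0 k = z} = count_list (map (X \<xi> 0) [0..<n]) z"
proof (induction n)
  case 0 then show ?case by simp
next
  case (Suc n)
  have "{k. k < Suc n \<and> X \<xi> 0 k = z} = {k. k < n \<and> X \<xi> 0 k = z} \<union> (if X \<xi> 0 n = z then {n} else {})"
    by (auto simp: less_Suc_eq)
  then have "card {k. k < Suc n \<and> X \<xi> 0 k = z} = card {k. k < n \<and> X \<xi> 0 k = z} + (if X \<xi> 0 n = z then 1 else 0)"
    by (simp add: card_Un_disjoint)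
  then show ?case using Suc by simp
qed

context cookie
begin

lemma pw_hist: "pw (walk_hist \<xi> 0 n) = \<omega> (X \<xi> 0 n) (card {k. k < n \<and> X \<xi> 0 k = X \<xi> 0 n} + 1)"
  unfolding pw_def keyL_hist card_visits by (simp add: hist_upt)

lemma D_Suc: "D \<omega> \<xi> 0 (Suc n) z = D \<omega> \<xi> 0 n z + (if X \<xi> 0 n = z then 2 * pw (walk_hist \<xi> 0 n) - 1 else 0)"
proof -
  have c: "card {m. m < Suc n \<and> X \<xi> 0 m = z} = card {m. m < n \<and> X \<xi> 0 m = z} + (if X \<xi> 0 n = z then 1 else 0)"
    unfolding card_visits by simp
  show ?thesis
  proof (cases "X \<xi> 0 n = z")
    case True
    then show ?thesis unfolding D_def c using pw_hist[of \<xi> n] by simp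
  next
    case False
    then show ?thesis unfolding D_def c by simp
  qed
qed

lemma D_plus_F:
  "finite F \<Longrightarrow> {z. 0 \<le> z \<and> (\<exists>m<n. X \<xi> 0 m = z)} \<subseteq> F \<Longrightarrow> F \<subseteq> {z. 0 \<le> z} \<Longrightarrow>
   (\<Sum>z\<in>F. D \<omega> \<xi> 0 n z) = (\<Sum>m<n. if 0 \<le> X \<xi> 0 m then 2 * pw (walk_hist \<xi> 0 m) - 1 else 0)"
proof (induction n)
  case 0
  then show ?case by (simp add: D_def)
next
  case (Suc n)
  have sub: "{z. 0 \<le> z \<and> (\<exists>m<n. X \<xi> 0 m = z)} \<subseteq> F" using Suc.prems(2) by (blast intro: less_SucI)
  have "(\<Sum>z\<in>F. D \<omega> \<xi> 0 (Suc n) z) = (\<Sum>z\<in>F. D \<omega> \<xi> 0 n z) + (\<Sum>z\<in>F. if X \<xi> 0 n = z then 2 * pw (walk_hist \<xi> 0 n) - 1 else 0)"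
    by (simp add: D_Suc sum.distrib)
  also have "(\<Sum>z\<in>F. if X \<xi> 0 n = z then 2 * pw (walk_hist \<xi> 0 n) - 1 else 0) = (if 0 \<le> X \<xi> 0 n then 2 * pw (walk_hist \<xi> 0 n) - 1 else 0)"
  proof -
    have "X \<xi> 0 n \<in> F \<longleftrightarrow> 0 \<le> X \<xi> 0 n" using Suc.prems(2,3) by auto
    then show ?thesis using Suc.prems(1) by (simp add: sum.delta)
  qed
  finally show ?case using Suc.IH[OF Suc.prems(1) sub Suc.prems(3)] by simp
qed

lemma D_plus_eq: "D_plus \<omega> \<xi> 0 n = (\<Sum>m<n. if 0 \<le> X \<xi> 0 m then 2 * pw (walk_hist \<xi> 0 m) - 1 else 0)"
proof -
  have fin: "finite {z. 0 \<le> z \<and> (\<exists>m<n. X \<xi> 0 m = z)}"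
    by (rule finite_subset[of _ "X \<xi> 0 ` {..<n}"]) auto
  show ?thesis unfolding D_plus_def by (rule D_plus_F[OF fin]) auto
qed

end

lemma take_hist: "m \<le> n \<Longrightarrow> take (Suc m) (walk_hist \<xi> 0 n) = walk_hist \<xi> 0 m"
  by (simp add: hist_map take_map del: upt_Suc)

lemma hist_det: "walk_hist \<xi> 0 n = walk_hist \<xi>' 0 n \<Longrightarrow> m \<le> n \<Longrightarrow> walk_hist \<xi> 0 m = walk_hist \<xi>' 0 m"
  by (metis take_hist)

lemma X_det: "walk_hist \<xi> 0 n = walk_hist \<xi>' 0 n \<Longrightarrow> m \<le> n \<Longrightarrow> X \<xi> 0 m = X \<xi>' 0 m"
  by (metis hist_det last_hist)

lemma det_facts: "walk_hist \<xi> 0 n = walk_hist \<xi>' 0 n \<Longrightarrow> m < n \<Longrightarrow>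
   walk_hist \<xi> 0 m = walk_hist \<xi>' 0 m \<and> X \<xi> 0 m = X \<xi>' 0 m \<and> X \<xi> 0 (Suc m) = X \<xi>' 0 (Suc m)"
  using hist_det[of \<xi> n \<xi>' m] X_det[of \<xi> n \<xi>' m] X_det[of \<xi> n \<xi>' "Suc m"] by simp

lemma int_det:
  fixes f :: "(int \<times> nat \<Rightarrow> bool) \<Rightarrow> real"
  assumes "\<And>\<xi> \<xi>'. walk_hist \<xi> 0 n = walk_hist \<xi>' 0 n \<Longrightarrow> f \<xi> = f \<xi>'"
  shows "integrable (coin_space \<omega>) f"
proof -
  define F where "F l = f (SOME \<xi>. walk_hist \<xi> 0 n = l)" for l
  have "f = (\<lambda>\<xi>. F (walk_hist \<xi> 0 n))"
  proof
    fix \<xi>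
    have "walk_hist (SOME \<xi>'. walk_hist \<xi>' 0 n = walk_hist \<xi> 0 n) 0 n = walk_hist \<xi> 0 n"
      by (rule someI[where P="\<lambda>\<xi>'. walk_hist \<xi>' 0 n = walk_hist \<xi> 0 n"]) (rule refl)
    then show "f \<xi> = F (walk_hist \<xi> 0 n)" unfolding F_def by (intro assms) simp
  qed
  then show ?thesis using fun_hist_integrable[where F=F and \<omega>=\<omega> and x=0 and n=n] by simp
qed

lemma int_hist_pred:
  "integrable (coin_space \<omega>) (\<lambda>\<xi>. if Q (walk_hist \<xi> 0 n) then c else (0::real))"
  using fun_hist_integrable[where F="\<lambda>l. if Q l then c else 0" and \<omega>=\<omega> and x=0 and n=n] by simp

lemma Ssum_det: assumes h: "walk_hist \<xi> 0 n = walk_hist \<xi>' 0 n" shows "Ssum K \<xi> n = Ssum K \<xi>' n"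
  unfolding Ssum_def by (intro sum.cong refl, drule lessThan_iff[THEN iffD1], drule det_facts[OF h], elim conjE, simp)

lemma Vsum_det: assumes h: "walk_hist \<xi> 0 n = walk_hist \<xi>' 0 n" shows "Vsum K \<xi> n = Vsum K \<xi>' n"
  unfolding Vsum_def by (intro sum.cong refl, drule lessThan_iff[THEN iffD1], drule det_facts[OF h], elim conjE, simp)

lemma Wsum_det: assumes h: "walk_hist \<xi> 0 n = walk_hist \<xi>' 0 n" shows "Wsum K j \<xi> n = Wsum K j \<xi>' n"
  unfolding Wsum_def by (intro sum.cong refl, drule lessThan_iff[THEN iffD1], drule det_facts[OF h], elim conjE, simp)

lemma Usum_det: assumes h: "walk_hist \<xi> 0 n = walk_hist \<xi>' 0 n" shows "Usum K j \<xi> n = Usum K j \<xi>' n"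
  unfolding Usum_def by (intro sum.cong refl, drule lessThan_iff[THEN iffD1], drule det_facts[OF h], elim conjE, simp)

lemma Asum_det: assumes h: "walk_hist \<xi> 0 n = walk_hist \<xi>' 0 n" shows "Asum K M \<xi> n = Asum K M \<xi>' n"
  unfolding Asum_def by (intro sum.cong refl, drule lessThan_iff[THEN iffD1], drule det_facts[OF h], elim conjE, simp)

lemma Qsum_det: assumes h: "walk_hist \<xi> 0 n = walk_hist \<xi>' 0 n" shows "Qsum K M \<xi> n = Qsum K M \<xi>' n"
  unfolding Qsum_def by (intro sum.cong refl, drule lessThan_iff[THEN iffD1], drule det_facts[OF h], elim conjE, simp)

lemma Rsum_det: assumes h: "walk_hist \<xi> 0 n = walk_hist \<xi>' 0 n" shows "Rsum K M \<xi> n = Rsum K M \<xi>' n"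
  unfolding Rsum_def by (intro sum.cong refl, drule lessThan_iff[THEN iffD1], drule det_facts[OF h], elim conjE, simp)

lemma int_S: "integrable (coin_space \<omega>) (\<lambda>\<xi>. real_of_int (Ssum K \<xi> n))"
  by (rule int_det[where n=n]) (metis Ssum_det)
lemma int_V: "integrable (coin_space \<omega>) (\<lambda>\<xi>. real_of_int (Vsum K \<xi> n))"
  by (rule int_det[where n=n]) (metis Vsum_det)
lemma int_W: "integrable (coin_space \<omega>) (\<lambda>\<xi>. real_of_int (Wsum K j \<xi> n))"
  by (rule int_det[where n=n]) (metis Wsum_det)
lemma int_U: "integrable (coin_space \<omega>) (\<lambda>\<xi>. real_of_int (Usum K j \<xi> n))"
  by (rule int_det[where n=n]) (metis Usum_det)
lemma int_A: "integrable (coin_space \<omega>) (\<lambda>\<xi>. real_of_int (Asum K M \<xi> n))"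
  by (rule int_det[where n=n]) (metis Asum_det)
lemma int_Q: "integrable (coin_space \<omega>) (\<lambda>\<xi>. real_of_int (Qsum K M \<xi> n))"
  by (rule int_det[where n=n]) (metis Qsum_det)
lemma int_R: "integrable (coin_space \<omega>) (\<lambda>\<xi>. real_of_int (Rsum K M \<xi> n))"
  by (rule int_det[where n=n]) (metis Rsum_det)

sublocale cookie \<subseteq> C: prob_space "coin_space \<omega>" by (rule ps)

context cookie
begin

lemma prob_UNIV[simp]: "measure (coin_space \<omega>) UNIV = 1"
  using C.prob_space by simp

definition Dsum :: "int \<Rightarrow> (int \<times> nat \<Rightarrow> bool) \<Rightarrow> nat \<Rightarrow> real" where
  "Dsum K \<xi> n = (\<Sum>m<n. if K \<notin> set (walk_hist \<xi> 0 m) \<and> 0 \<le> X \<xi> 0 m then 2 * pw (walk_hist \<xi> 0 m) - 1 else 0)"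

lemma Dsum_det: assumes h: "walk_hist \<xi> 0 n = walk_hist \<xi>' 0 n" shows "Dsum K \<xi> n = Dsum K \<xi>' n"
  unfolding Dsum_def by (intro sum.cong refl, drule lessThan_iff[THEN iffD1], drule det_facts[OF h], elim conjE, simp)

lemma int_D: "integrable (coin_space \<omega>) (\<lambda>\<xi>. Dsum K \<xi> n)"
  by (rule int_det[where n=n]) (metis Dsum_det)

lemma d_nonneg: "0 \<le> 2 * pw (walk_hist \<xi> 0 m) - 1"
  using pw_bounds[of \<xi> m] by simp

lemma d_ge: "1 \<le> 2 * pw (walk_hist \<xi> 0 m)"
  using pw_bounds[of \<xi> m] by simp

lemma Dsum_nonneg: "0 \<le> Dsum K \<xi> n"
  unfolding Dsum_def by (intro sum_nonneg) (simp add: d_nonneg d_ge)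

lemma Dsum_mono: "n \<le> n' \<Longrightarrow> Dsum K \<xi> n \<le> Dsum K \<xi> n'"
  unfolding Dsum_def by (intro sum_mono2) (simp_all add: d_nonneg d_ge)

lemma E_S_D: "(\<integral>\<xi>. real_of_int (Ssum K \<xi> n) \<partial>coin_space \<omega>) = (\<integral>\<xi>. Dsum K \<xi> n \<partial>coin_space \<omega>)"
proof -
  let ?H = "\<lambda>m l. if K \<notin> set l \<and> 0 \<le> last l then 1 else (0::real)"
  have 1: "real_of_int (Ssum K \<xi> n) = (\<Sum>m<n. ?H m (walk_hist \<xi> 0 m) * (X \<xi> 0 (Suc m) - X \<xi> 0 m))" for \<xi>
    unfolding Ssum_def of_int_sum by (intro sum.cong refl) auto
  have 2: "Dsum K \<xi> n = (\<Sum>m<n. ?H m (walk_hist \<xi> 0 m) * (2 * pw (walk_hist \<xi> 0 m) - 1))" for \<xi>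
    unfolding Dsum_def by (intro sum.cong refl) auto
  show ?thesis unfolding 1 2 by (rule mart_sum)
qed

lemma E_S_le: "0 \<le> K \<Longrightarrow> (\<integral>\<xi>. Dsum K \<xi> n \<partial>coin_space \<omega>) \<le> K"
proof -
  assume K: "0 \<le> K"
  have "(\<integral>\<xi>. real_of_int (Ssum K \<xi> n) \<partial>coin_space \<omega>) \<le> (\<integral>\<xi>. real_of_int K \<partial>coin_space \<omega>)"
    by (intro integral_mono int_S) (auto simp: S_le[OF K])
  moreover have "measure (coin_space \<omega>) UNIV = 1" using C.prob_space by simp
  ultimately show ?thesis by (simp add: E_S_D)
qed

definition hitp :: "int \<Rightarrow> nat \<Rightarrow> real" where
  "hitp K n = (\<integral>\<xi>. (if K \<in> set (walk_hist \<xi> 0 n) then 1 else 0) \<partial>coin_space \<omega>)"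

lemma SV_ge0: "0 \<le> K \<Longrightarrow> 0 \<le> Ssum K \<xi> n + Vsum K \<xi> n"
  using SV_inv[of K \<xi> n] by (cases "\<exists>k\<le>n. X \<xi> 0 k = K") force+

lemma E_SV: "0 \<le> K \<Longrightarrow> K * hitp K n \<le> (\<integral>\<xi>. Dsum K \<xi> n \<partial>coin_space \<omega>) + (\<integral>\<xi>. real_of_int (Vsum K \<xi> n) \<partial>coin_space \<omega>)"
proof -
  assume K: "0 \<le> K"
  have "(\<integral>\<xi>. (if K \<in> set (walk_hist \<xi> 0 n) then real_of_int K else 0) \<partial>coin_space \<omega>) \<le>
        (\<integral>\<xi>. real_of_int (Ssum K \<xi> n) + real_of_int (Vsum K \<xi> n) \<partial>coin_space \<omega>)"
    by (intro integral_mono int_hist_pred Bochner_Integration.integrable_add int_S int_V)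
       (auto simp: SV_ge[OF K] SV_ge0[OF K] simp del: of_int_add simp flip: of_int_add)
  also have "\<dots> = (\<integral>\<xi>. Dsum K \<xi> n \<partial>coin_space \<omega>) + (\<integral>\<xi>. real_of_int (Vsum K \<xi> n) \<partial>coin_space \<omega>)"
    by (simp add: Bochner_Integration.integral_add[OF int_S int_V] E_S_D)
  also have "(\<integral>\<xi>. (if K \<in> set (walk_hist \<xi> 0 n) then real_of_int K else 0) \<partial>coin_space \<omega>) = K * hitp K n"
    unfolding hitp_def by (subst integral_mult_right_zero[symmetric]) (intro Bochner_Integration.integral_cong; simp)
  finally show ?thesis .
qed

text \<open>Gambler's ruin estimate.\<close>

lemma E_A_le:
  assumes K: "0 \<le> K" and M: "0 \<le> M"
  shows "(\<integral>\<xi>. real_of_int (Asum K M \<xi> n) \<partial>coin_space \<omega>) \<le> real_of_int ((K + M)^2)"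
proof -
  let ?H = "\<lambda>m l. if Act K M l then 2 * (real_of_int (last l) + M) else (0::real)"
  have split: "real_of_int (Qsum K M \<xi> n) = (\<Sum>m<n. ?H m (walk_hist \<xi> 0 m) * (X \<xi> 0 (Suc m) - X \<xi> 0 m)) + real_of_int (Asum K M \<xi> n)" for \<xi>
    unfolding Qsum_def Asum_def of_int_sum sum.distrib[symmetric] by (intro sum.cong refl) auto
  have eqf: "(\<lambda>\<xi>. \<Sum>m<n. ?H m (walk_hist \<xi> 0 m) * (X \<xi> 0 (Suc m) - X \<xi> 0 m)) = (\<lambda>\<xi>. real_of_int (Qsum K M \<xi> n) - real_of_int (Asum K M \<xi> n))"
    using split by auto
  have i1: "integrable (coin_space \<omega>) (\<lambda>\<xi>. \<Sum>m<n. ?H m (walk_hist \<xi> 0 m) * (X \<xi> 0 (Suc m) - X \<xi> 0 m))"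
    unfolding eqf by (intro Bochner_Integration.integrable_diff int_Q int_A)
  have nn: "0 \<le> (\<integral>\<xi>. (\<Sum>m<n. ?H m (walk_hist \<xi> 0 m) * (X \<xi> 0 (Suc m) - X \<xi> 0 m)) \<partial>coin_space \<omega>)"
  proof -
    have "(\<integral>\<xi>. (\<Sum>m<n. ?H m (walk_hist \<xi> 0 m) * (X \<xi> 0 (Suc m) - X \<xi> 0 m)) \<partial>coin_space \<omega>)
        = (\<integral>\<xi>. (\<Sum>m<n. ?H m (walk_hist \<xi> 0 m) * (2 * pw (walk_hist \<xi> 0 m) - 1)) \<partial>coin_space \<omega>)"
      by (rule mart_sum)
    also have "0 \<le> \<dots>"
    proof (intro integral_nonneg_AE AE_I2 sum_nonneg)
      fix \<xi> m
      have "0 \<le> ?H m (walk_hist \<xi> 0 m)"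
      proof (cases "Act K M (walk_hist \<xi> 0 m)")
        case True
        then have "\<forall>k\<le>m. -M < X \<xi> 0 k \<and> X \<xi> 0 k < K" by (simp add: Act_hist)
        then have "-M < X \<xi> 0 m" by blast
        then have r: "real_of_int (-M) < real_of_int (X \<xi> 0 m)" by (simp only: of_int_less_iff)
        have "0 \<le> 2 * (real_of_int (X \<xi> 0 m) + real_of_int M)" using r by simp
        then show ?thesis using True by simp
      next
        case False then show ?thesis by simp
      qed
      moreover have "0 \<le> 2 * pw (walk_hist \<xi> 0 m) - 1" using pw_bounds[of \<xi> m] by simp
      ultimately show "0 \<le> ?H m (walk_hist \<xi> 0 m) * (2 * pw (walk_hist \<xi> 0 m) - 1)" by simp
    qed
    finally show ?thesis .
  qed
  have "(\<integral>\<xi>. real_of_int (Qsum K M \<xi> n) \<partial>coin_space \<omega>) \<le> (\<integral>\<xi>. real_of_int ((K + M)^2) \<partial>coin_space \<omega>)"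
    by (intro integral_mono int_Q) (simp_all add: Q_le[OF K M] del: of_int_power)
  then have "(\<integral>\<xi>. real_of_int (Qsum K M \<xi> n) \<partial>coin_space \<omega>) \<le> real_of_int ((K + M)^2)"
    by (simp add: C.prob_space del: of_int_power)
  moreover have "(\<integral>\<xi>. real_of_int (Qsum K M \<xi> n) \<partial>coin_space \<omega>) =
      (\<integral>\<xi>. (\<Sum>m<n. ?H m (walk_hist \<xi> 0 m) * (X \<xi> 0 (Suc m) - X \<xi> 0 m)) \<partial>coin_space \<omega>) + (\<integral>\<xi>. real_of_int (Asum K M \<xi> n) \<partial>coin_space \<omega>)"
    unfolding split by (rule Bochner_Integration.integral_add[OF i1 int_A])
  ultimately show ?thesis using nn by linarith
qed

definition actp :: "int \<Rightarrow> int \<Rightarrow> nat \<Rightarrow> real" where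
  "actp K M n = (\<integral>\<xi>. (if Act K M (walk_hist \<xi> 0 n) then 1 else 0) \<partial>coin_space \<omega>)"

lemma actp_le:
  assumes K: "0 \<le> K" and M: "0 \<le> M"
  shows "real (Suc n) * actp K M n \<le> real_of_int ((K + M)^2)"
proof -
  have "real (Suc n) * actp K M n = (\<integral>\<xi>. (if Act K M (walk_hist \<xi> 0 n) then real (Suc n) else 0) \<partial>coin_space \<omega>)"
    unfolding actp_def by (subst integral_mult_right_zero[symmetric]) (intro Bochner_Integration.integral_cong; simp)
  also have "\<dots> \<le> (\<integral>\<xi>. real_of_int (Asum K M \<xi> (Suc n)) \<partial>coin_space \<omega>)"
  proof (intro integral_mono int_hist_pred int_A)
    fix \<xi>
    show "(if Act K M (walk_hist \<xi> 0 n) then real (Suc n) else 0) \<le> real_of_int (Asum K M \<xi> (Suc n))"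
      using A_ge[of K M \<xi> n] A_nonneg[of K M \<xi> "Suc n"] by (auto simp del: of_nat_Suc)
  qed
  also have "\<dots> \<le> real_of_int ((K + M)^2)" by (rule E_A_le[OF K M])
  finally show ?thesis .
qed

lemma miss_le:
  assumes K: "0 \<le> K" and M: "0 < M"
  shows "1 - hitp K n \<le> actp K M n + 2 * K / M"
proof -
  let ?I = "\<lambda>Q. (\<lambda>\<xi>. if Q (walk_hist \<xi> 0 n) then 1 else (0::real))"
  let ?H = "\<lambda>m l. if Act K M l then 1 else (0::real)"
  have R1: "real_of_int (Rsum K M \<xi> n) = (\<Sum>m<n. ?H m (walk_hist \<xi> 0 m) * (X \<xi> 0 (Suc m) - X \<xi> 0 m))" for \<xi>
    unfolding Rsum_def of_int_sum by (intro sum.cong refl) auto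
  have "0 \<le> (\<integral>\<xi>. (\<Sum>m<n. ?H m (walk_hist \<xi> 0 m) * (2 * pw (walk_hist \<xi> 0 m) - 1)) \<partial>coin_space \<omega>)"
    by (intro integral_nonneg_AE AE_I2 sum_nonneg) (simp add: d_nonneg d_ge)
  also have "\<dots> = (\<integral>\<xi>. real_of_int (Rsum K M \<xi> n) \<partial>coin_space \<omega>)"
    unfolding R1 by (rule mart_sum[symmetric])
  also have "\<dots> \<le> (\<integral>\<xi>. K * ?I (\<lambda>l. K \<in> set l) \<xi> + K * ?I (Act K M) \<xi> - M * ?I (\<lambda>l. \<not> Act K M l \<and> K \<notin> set l) \<xi> \<partial>coin_space \<omega>)"
  proof (intro integral_mono int_R Bochner_Integration.integrable_diff Bochner_Integration.integrable_add integrable_mult_right int_hist_pred)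
    fix \<xi>
    show "real_of_int (Rsum K M \<xi> n) \<le> K * ?I (\<lambda>l. K \<in> set l) \<xi> + K * ?I (Act K M) \<xi> - M * ?I (\<lambda>l. \<not> Act K M l \<and> K \<notin> set l) \<xi>"
      using R_le[OF K, of M \<xi> n] M by (auto split: if_splits)
  qed
  also have "\<dots> = K * hitp K n + K * actp K M n - M * (\<integral>\<xi>. ?I (\<lambda>l. \<not> Act K M l \<and> K \<notin> set l) \<xi> \<partial>coin_space \<omega>)"
    unfolding hitp_def actp_def
    by (subst Bochner_Integration.integral_diff, (intro Bochner_Integration.integrable_add integrable_mult_right int_hist_pred)+,
        subst Bochner_Integration.integral_add, (intro integrable_mult_right int_hist_pred)+, simp)
  finally have ineq: "M * (\<integral>\<xi>. ?I (\<lambda>l. \<not> Act K M l \<and> K \<notin> set l) \<xi> \<partial>coin_space \<omega>) \<le> K * hitp K n + K * actp K M n" by simp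
  have hp: "hitp K n \<le> 1" unfolding hitp_def
    using C.integral_le_const[of "?I (\<lambda>l. K \<in> set l)" 1] int_hist_pred[where Q="\<lambda>l. K \<in> set l" and n=n and c=1 and \<omega>=\<omega>] by simp
  have ap: "actp K M n \<le> 1" unfolding actp_def
    using C.integral_le_const[of "?I (Act K M)" 1] int_hist_pred[where Q="Act K M" and n=n and c=1 and \<omega>=\<omega>] by simp
  have "M * (\<integral>\<xi>. ?I (\<lambda>l. \<not> Act K M l \<and> K \<notin> set l) \<xi> \<partial>coin_space \<omega>) \<le> 2 * K"
    using ineq hp ap K mult_left_mono[OF hp, of "real_of_int K"] mult_left_mono[OF ap, of "real_of_int K"] by linarith
  then have q: "(\<integral>\<xi>. ?I (\<lambda>l. \<not> Act K M l \<and> K \<notin> set l) \<xi> \<partial>coin_space \<omega>) \<le> 2 * K / M"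
    using M by (simp add: field_simps)
  have "1 - hitp K n = (\<integral>\<xi>. ?I (\<lambda>l. K \<notin> set l) \<xi> \<partial>coin_space \<omega>)"
  proof -
    have "(\<integral>\<xi>. ?I (\<lambda>l. K \<notin> set l) \<xi> \<partial>coin_space \<omega>) = (\<integral>\<xi>. 1 - ?I (\<lambda>l. K \<in> set l) \<xi> \<partial>coin_space \<omega>)"
      by (intro Bochner_Integration.integral_cong) auto
    also have "\<dots> = 1 - hitp K n" unfolding hitp_def
      by (subst Bochner_Integration.integral_diff) (auto intro: int_hist_pred)
    finally show ?thesis by simp
  qed
  also have "\<dots> \<le> (\<integral>\<xi>. ?I (Act K M) \<xi> + ?I (\<lambda>l. \<not> Act K M l \<and> K \<notin> set l) \<xi> \<partial>coin_space \<omega>)"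
    by (intro integral_mono Bochner_Integration.integrable_add int_hist_pred) auto
  also have "\<dots> = actp K M n + (\<integral>\<xi>. ?I (\<lambda>l. \<not> Act K M l \<and> K \<notin> set l) \<xi> \<partial>coin_space \<omega>)"
    unfolding actp_def by (rule Bochner_Integration.integral_add) (auto intro: int_hist_pred)
  finally show ?thesis using q by linarith
qed

end

lemma int_sum_det:
  fixes f :: "nat \<Rightarrow> (int \<times> nat \<Rightarrow> bool) \<Rightarrow> real"
  assumes "\<And>m \<xi> \<xi>'. walk_hist \<xi> 0 m = walk_hist \<xi>' 0 m \<Longrightarrow> X \<xi> 0 m = X \<xi>' 0 m \<Longrightarrow>
     X \<xi> 0 (Suc m) = X \<xi>' 0 (Suc m) \<Longrightarrow> f m \<xi> = f m \<xi>'"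
  shows "integrable (coin_space \<omega>) (\<lambda>\<xi>. \<Sum>m<n. f m \<xi>)"
proof (rule int_det[where n=n])
  fix \<xi> \<xi>' :: "int \<times> nat \<Rightarrow> bool"
  assume h: "walk_hist \<xi> 0 n = walk_hist \<xi>' 0 n"
  show "(\<Sum>m<n. f m \<xi>) = (\<Sum>m<n. f m \<xi>')"
  proof (rule sum.cong[OF refl])
    fix m assume "m \<in> {..<n}"
    then have "m < n" by simp
    from det_facts[OF h this] show "f m \<xi> = f m \<xi>'" by (intro assms) auto
  qed
qed

lemma ind_meas: "(\<integral>\<xi>. (if Q (walk_hist \<xi> 0 n) then 1 else 0) \<partial>coin_space \<omega>) = measure (coin_space \<omega>) {\<xi>. Q (walk_hist \<xi> 0 n)}"
proof -
  have "(\<lambda>\<xi>. (if Q (walk_hist \<xi> 0 n) then 1 else 0) :: real) = indicator {\<xi>. Q (walk_hist \<xi> 0 n)}"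
    by (auto simp: indicator_def)
  then show ?thesis by simp
qed

definition bset :: "nat \<Rightarrow> (int \<times> nat \<Rightarrow> bool) set" where
  "bset j = {\<xi>. \<exists>m. j \<le> count_list (walk_hist \<xi> 0 m) 0}"

lemma bset_sets: "bset j \<in> sets (coin_space \<omega>)"
proof -
  have "bset j = (\<Union>m. {\<xi>. j \<le> count_list (walk_hist \<xi> 0 m) 0})" by (auto simp: bset_def)
  also have "\<dots> \<in> sets (coin_space \<omega>)"
    by (rule sets.countable_UN) (use fun_hist_sets[where Q="\<lambda>l. j \<le> count_list l 0" and x=0] in auto)
  finally show ?thesis .
qed

lemma bset_dec: "decseq bset"
  unfolding decseq_def bset_def by (blast intro: order_trans)

lemma bset_inter: "\<xi> \<in> (\<Inter>j. bset j) \<Longrightarrow> (\<exists>\<^sub>F n in sequentially. X \<xi> 0 n = 0)"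
proof -
  assume a: "\<xi> \<in> (\<Inter>j. bset j)"
  show ?thesis unfolding frequently_sequentially
  proof (rule allI, rule ccontr)
    fix N assume "\<not> (\<exists>n\<ge>N. X \<xi> 0 n = 0)"
    then have nz: "\<And>n. N \<le> n \<Longrightarrow> X \<xi> 0 n \<noteq> 0" by auto
    from a obtain m where m: "Suc N \<le> count_list (walk_hist \<xi> 0 m) 0" by (auto simp: bset_def)
    have "count_list (walk_hist \<xi> 0 m) 0 = card {k. k < Suc m \<and> X \<xi> 0 k = 0}"
      unfolding card_visits hist_map by simp
    also have "\<dots> \<le> card {..<N}"
      by (rule card_mono) (auto simp: not_le[symmetric] intro: ccontr dest: nz)
    finally show False using m by simp
  qed
qed

context cookie
begin

definition bj :: "nat \<Rightarrow> real" where
  "bj j = measure (coin_space \<omega>) (bset j)"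

lemma bj_lim:
  assumes tr: "transient_site \<omega> 0"
  shows "bj \<longlonglongrightarrow> 0"
proof -
  have lim: "(\<lambda>j. measure (coin_space \<omega>) (bset j)) \<longlonglongrightarrow> measure (coin_space \<omega>) (\<Inter>j. bset j)"
    by (rule C.finite_Lim_measure_decseq) (auto simp: bset_sets bset_dec)
  have ae: "AE \<xi> in coin_space \<omega>. \<not> (\<exists>\<^sub>F n in sequentially. X \<xi> 0 n = 0)"
    using tr unfolding transient_site_def by blast
  have ae2: "AE \<xi> in coin_space \<omega>. \<xi> \<notin> (\<Inter>j. bset j)"
    using ae by eventually_elim (use bset_inter in blast)
  have sI: "(\<Inter>j. bset j) \<in> sets (coin_space \<omega>)" by (intro sets.countable_INT') (auto simp: bset_sets)
  have eqs: "{x \<in> space (coin_space \<omega>). \<not> (x \<notin> (\<Inter>j. bset j))} = (\<Inter>j. bset j)" by auto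
  have "emeasure (coin_space \<omega>) (\<Inter>j. bset j) = 0"
    using AE_iff_measurable[OF sI eqs] ae2 by blast
  then have "measure (coin_space \<omega>) (\<Inter>j. bset j) = 0" by (simp add: measure_def)
  then show ?thesis using lim unfolding bj_def by simp
qed

lemma E_W:
  assumes K: "0 \<le> K"
  shows "(\<integral>\<xi>. real_of_int (Wsum K j \<xi> n) \<partial>coin_space \<omega>) \<le> 2 * K * bj j"
proof -
  let ?H1 = "\<lambda>m l. if HI K j l \<and> 1 \<le> last l then 1 else (0::real)"
  let ?H2 = "\<lambda>m l. if HI K j l \<and> last l = 0 then 1 else (0::real)"
  have split: "real_of_int (Usum K j \<xi> n) =
     (\<Sum>m<n. ?H1 m (walk_hist \<xi> 0 m) * (X \<xi> 0 (Suc m) - X \<xi> 0 m)) +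
     (\<Sum>m<n. ?H2 m (walk_hist \<xi> 0 m) * (if X \<xi> 0 (Suc m) = X \<xi> 0 m + 1 then 1 else 0))" for \<xi>
    unfolding Usum_def of_int_sum sum.distrib[symmetric] by (intro sum.cong refl) auto
  have i1: "integrable (coin_space \<omega>) (\<lambda>\<xi>. \<Sum>m<n. ?H1 m (walk_hist \<xi> 0 m) * (X \<xi> 0 (Suc m) - X \<xi> 0 m))"
    by (rule int_sum_det) simp
  have i2: "integrable (coin_space \<omega>) (\<lambda>\<xi>. \<Sum>m<n. ?H2 m (walk_hist \<xi> 0 m) * (if X \<xi> 0 (Suc m) = X \<xi> 0 m + 1 then 1 else 0))"
    by (rule int_sum_det) simp
  have i3: "integrable (coin_space \<omega>) (\<lambda>\<xi>. \<Sum>m<n. ?H2 m (walk_hist \<xi> 0 m) * pw (walk_hist \<xi> 0 m))"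
    by (rule int_sum_det) simp
  have i4: "integrable (coin_space \<omega>) (\<lambda>\<xi>. \<Sum>m<n. ?H1 m (walk_hist \<xi> 0 m) * (2 * pw (walk_hist \<xi> 0 m) - 1))"
    by (rule int_sum_det) simp
  have EU: "(\<integral>\<xi>. real_of_int (Usum K j \<xi> n) \<partial>coin_space \<omega>) =
      (\<integral>\<xi>. (\<Sum>m<n. ?H1 m (walk_hist \<xi> 0 m) * (2 * pw (walk_hist \<xi> 0 m) - 1)) \<partial>coin_space \<omega>) +
      (\<integral>\<xi>. (\<Sum>m<n. ?H2 m (walk_hist \<xi> 0 m) * pw (walk_hist \<xi> 0 m)) \<partial>coin_space \<omega>)"
  proof -
    have e0: "(\<integral>\<xi>. real_of_int (Usum K j \<xi> n) \<partial>coin_space \<omega>) =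
      (\<integral>\<xi>. (\<Sum>m<n. ?H1 m (walk_hist \<xi> 0 m) * (X \<xi> 0 (Suc m) - X \<xi> 0 m)) \<partial>coin_space \<omega>) +
      (\<integral>\<xi>. (\<Sum>m<n. ?H2 m (walk_hist \<xi> 0 m) * (if X \<xi> 0 (Suc m) = X \<xi> 0 m + 1 then 1 else 0)) \<partial>coin_space \<omega>)"
      unfolding split by (rule Bochner_Integration.integral_add[OF i1 i2])
    have e1: "(\<integral>\<xi>. (\<Sum>m<n. ?H1 m (walk_hist \<xi> 0 m) * (X \<xi> 0 (Suc m) - X \<xi> 0 m)) \<partial>coin_space \<omega>) =
      (\<integral>\<xi>. (\<Sum>m<n. ?H1 m (walk_hist \<xi> 0 m) * (2 * pw (walk_hist \<xi> 0 m) - 1)) \<partial>coin_space \<omega>)"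
      by (rule mart_sum)
    have e2: "(\<integral>\<xi>. (\<Sum>m<n. ?H2 m (walk_hist \<xi> 0 m) * (if X \<xi> 0 (Suc m) = X \<xi> 0 m + 1 then 1 else 0)) \<partial>coin_space \<omega>) =
      (\<integral>\<xi>. (\<Sum>m<n. ?H2 m (walk_hist \<xi> 0 m) * pw (walk_hist \<xi> 0 m)) \<partial>coin_space \<omega>)"
      by (rule mart_ind_sum)
    show ?thesis using e0 e1 e2 by linarith
  qed
  have p1: "0 \<le> (\<integral>\<xi>. (\<Sum>m<n. ?H1 m (walk_hist \<xi> 0 m) * (2 * pw (walk_hist \<xi> 0 m) - 1)) \<partial>coin_space \<omega>)"
    by (intro integral_nonneg_AE AE_I2 sum_nonneg) (simp add: d_nonneg d_ge)
  have p2: "(\<integral>\<xi>. real_of_int (Wsum K j \<xi> n) / 2 \<partial>coin_space \<omega>) \<le>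
      (\<integral>\<xi>. (\<Sum>m<n. ?H2 m (walk_hist \<xi> 0 m) * pw (walk_hist \<xi> 0 m)) \<partial>coin_space \<omega>)"
  proof (intro integral_mono i3)
    show "integrable (coin_space \<omega>) (\<lambda>\<xi>. real_of_int (Wsum K j \<xi> n) / 2)"
      using int_W by (rule integrable_divide)
    fix \<xi>
    have "real_of_int (Wsum K j \<xi> n) / 2 = (\<Sum>m<n. ?H2 m (walk_hist \<xi> 0 m) * (1/2))"
      unfolding Wsum_def of_int_sum sum_divide_distrib by (intro sum.cong refl) auto
    also have "\<dots> \<le> (\<Sum>m<n. ?H2 m (walk_hist \<xi> 0 m) * pw (walk_hist \<xi> 0 m))"
      using pw_bounds by (intro sum_mono mult_left_mono) auto
    finally show "real_of_int (Wsum K j \<xi> n) / 2 \<le> (\<Sum>m<n. ?H2 m (walk_hist \<xi> 0 m) * pw (walk_hist \<xi> 0 m))" .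
  qed
  have p3: "(\<integral>\<xi>. real_of_int (Usum K j \<xi> n) \<partial>coin_space \<omega>) \<le> (\<integral>\<xi>. real_of_int K * indicator (bset j) \<xi> \<partial>coin_space \<omega>)"
  proof (intro integral_mono int_U)
    show "integrable (coin_space \<omega>) (\<lambda>\<xi>. real_of_int K * indicator (bset j) \<xi>)"
      by (intro integrable_mult_right) (simp add: integrable_indicator_iff bset_sets C.emeasure_eq_measure)
    fix \<xi>
    show "real_of_int (Usum K j \<xi> n) \<le> real_of_int K * indicator (bset j) \<xi>"
      using U_le[OF K, of j \<xi> n] by (auto simp: indicator_def bset_def split: if_splits)
  qed
  have p4: "(\<integral>\<xi>. real_of_int K * indicator (bset j) \<xi> \<partial>coin_space \<omega>) = K * bj j"
    by (simp add: bj_def bset_sets)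
  have "(\<integral>\<xi>. real_of_int (Wsum K j \<xi> n) / 2 \<partial>coin_space \<omega>) \<le> K * bj j"
    using EU p1 p2 p3 p4 by linarith
  then show ?thesis by simp
qed

lemma E_V:
  assumes K: "0 \<le> K" and j: "1 \<le> j"
  shows "(\<integral>\<xi>. real_of_int (Vsum K \<xi> n) \<partial>coin_space \<omega>) \<le> real j - 1 + 2 * K * bj j"
proof -
  have "(\<integral>\<xi>. real_of_int (Vsum K \<xi> n) \<partial>coin_space \<omega>) \<le> (\<integral>\<xi>. (real j - 1) + real_of_int (Wsum K j \<xi> n) \<partial>coin_space \<omega>)"
  proof (intro integral_mono int_V Bochner_Integration.integrable_add int_W)
    show "integrable (coin_space \<omega>) (\<lambda>\<xi>. real j - 1)" by simp
    fix \<xi> show "real_of_int (Vsum K \<xi> n) \<le> real j - 1 + real_of_int (Wsum K j \<xi> n)"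
      using V_le_W[OF j, of K \<xi> n] by linarith
  qed
  also have "\<dots> = (real j - 1) + (\<integral>\<xi>. real_of_int (Wsum K j \<xi> n) \<partial>coin_space \<omega>)"
    by (subst Bochner_Integration.integral_add) (auto intro: int_W)
  finally show ?thesis using E_W[OF K, of j n] by linarith
qed

lemma E_lower:
  assumes K: "0 \<le> K" and j: "1 \<le> j" and M: "0 < M"
  shows "real_of_int K - (real j - 1) - 2 * real_of_int K * bj j - real_of_int K * (real_of_int ((K + M)^2) / real (Suc n) + 2 * real_of_int K / real_of_int M)
     \<le> (\<integral>\<xi>. Dsum K \<xi> n \<partial>coin_space \<omega>)"
proof -
  have a: "actp K M n \<le> real_of_int ((K + M)^2) / real (Suc n)"
    using actp_le[OF K, of M n] M by (simp add: field_simps del: of_int_power)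
  have m: "1 - hitp K n \<le> actp K M n + 2 * real_of_int K / real_of_int M" by (rule miss_le[OF K M])
  have "real_of_int K * (1 - hitp K n) \<le> real_of_int K * (real_of_int ((K + M)^2) / real (Suc n) + 2 * real_of_int K / real_of_int M)"
    using a m K by (intro mult_left_mono) auto
  then show ?thesis using E_SV[OF K, of n] E_V[OF K j, of n] by (simp add: algebra_simps del: of_int_power)
qed

end

lemma eps_bound:
  fixes x c :: real and f :: "nat \<Rightarrow> real"
  assumes h: "\<And>M n. 1 \<le> M \<Longrightarrow> x \<le> f M / real (Suc n) + c / real M"
    and c: "0 \<le> c"
  shows "x \<le> 0"
proof (rule field_le_epsilon)
  fix e :: real assume e: "0 < e"
  obtain M0 :: nat where M0: "2 * c / e < real M0" using reals_Archimedean2 by blast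
  define M where "M = Suc M0"
  have M1: "1 \<le> M" by (simp add: M_def)
  have cM: "c / real M < e / 2"
  proof -
    have "2 * c / e < real M" using M0 by (simp add: M_def)
    then have "2 * c < real M * e" using e by (simp add: divide_less_eq)
    then show ?thesis using M1 by (simp add: field_simps mult.commute mult.left_commute)
  qed
  obtain n0 :: nat where n0: "2 * \<bar>f M\<bar> / e < real n0" using reals_Archimedean2 by blast
  have "\<bar>f M\<bar> / real (Suc n0) < e / 2"
  proof -
    have "2 * \<bar>f M\<bar> < real n0 * e" using n0 e by (simp add: divide_less_eq)
    then have "2 * \<bar>f M\<bar> < real (Suc n0) * e" using e by (smt (verit) mult_right_mono of_nat_Suc)
    then show ?thesis by (simp add: field_simps mult.commute mult.left_commute del: of_nat_Suc)
  qed
  moreover have "f M / real (Suc n0) \<le> \<bar>f M\<bar> / real (Suc n0)" by (intro divide_right_mono) auto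
  ultimately have "f M / real (Suc n0) < e / 2" by linarith
  then show "x \<le> 0 + e" using h[OF M1, of n0] cM by linarith
qed

lemma final_lim:
  fixes s b :: "nat \<Rightarrow> real"
  assumes b: "b \<longlonglongrightarrow> 0" and up: "\<And>K. 1 \<le> K \<Longrightarrow> s K \<le> real K"
    and low: "\<And>K j. 1 \<le> K \<Longrightarrow> 1 \<le> j \<Longrightarrow> real K - (real j - 1) - 2 * real K * b j \<le> s K"
  shows "(\<lambda>K. s K / real K) \<longlonglongrightarrow> 1"
proof (rule LIMSEQ_I)
  fix r :: real assume r: "0 < r"
  obtain j0 where j0: "\<forall>j\<ge>j0. norm (b j - 0) < r / 4" using LIMSEQ_D[OF b, of "r/4"] r by auto
  define j where "j = Suc j0"
  have j1: "1 \<le> j" by (simp add: j_def)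
  have bj: "\<bar>b j\<bar> < r / 4" using j0 by (simp add: j_def)
  obtain N0 :: nat where N0: "2 * real j / r < real N0" using reals_Archimedean2 by blast
  show "\<exists>no. \<forall>n\<ge>no. norm (s n / real n - 1) < r"
  proof (intro exI[of _ "Suc N0"] allI impI)
    fix K assume K: "Suc N0 \<le> K"
    have K1: "1 \<le> K" using K by simp
    have Kpos: "0 < real K" using K1 by simp
    have u: "s K / real K \<le> 1" using up[OF K1] Kpos by (simp add: divide_le_eq)
    have "real K - (real j - 1) - 2 * real K * b j \<le> s K" by (rule low[OF K1 j1])
    then have "(real K - (real j - 1) - 2 * real K * b j) / real K \<le> s K / real K"
      using Kpos by (intro divide_right_mono) auto
    moreover have "(real K - (real j - 1) - 2 * real K * b j) / real K = 1 - (real j - 1) / real K - 2 * b j"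
      using Kpos by (simp add: field_simps)
    ultimately have l: "1 - (real j - 1) / real K - 2 * b j \<le> s K / real K" by simp
    have "2 * real j < real N0 * r" using N0 r by (simp add: divide_less_eq)
    moreover have "real N0 < real K" using K by simp
    ultimately have "2 * real j < real K * r" using r by (smt (verit) mult_strict_right_mono)
    then have "real j / real K < r / 2" using Kpos by (simp add: field_simps mult.commute mult.left_commute)
    then have "(real j - 1) / real K < r / 2" using Kpos
      by (smt (verit, ccfv_SIG) divide_right_mono)
    then have "1 - r < s K / real K" using l bj by linarith
    then show "norm (s K / real K - 1) < r" using u r by simp
  qed
qed

context cookie
begin

lemma Dsum_const_after:
  assumes XT: "X \<xi> 0 T = K" and n: "T \<le> n"
  shows "Dsum K \<xi> n = Dsum K \<xi> T"
  using n
proof (induction n rule: dec_induct)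
  case base then show ?case by simp
next
  case (step n)
  have "K \<in> set (walk_hist \<xi> 0 n)" using in_hist[OF step.hyps(1), of \<xi>] XT by simp
  then show ?case using step.IH by (simp add: Dsum_def)
qed

lemma DT_hit:
  assumes h: "\<exists>n. X \<xi> 0 n = K"
  shows "D_plus_at_T \<omega> \<xi> 0 K = Dsum K \<xi> (LEAST n. X \<xi> 0 n = K)"
    and "Dsum K \<xi> n \<le> D_plus_at_T \<omega> \<xi> 0 K"
proof -
  define T where "T = (LEAST n. X \<xi> 0 n = K)"
  have XT: "X \<xi> 0 T = K" unfolding T_def by (rule LeastI_ex[OF h])
  have before: "K \<notin> set (walk_hist \<xi> 0 m)" if "m < T" for m
  proof
    assume "K \<in> set (walk_hist \<xi> 0 m)"
    then obtain k where k: "k \<le> m" "X \<xi> 0 k = K" by (auto simp: set_hist)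
    then have "T \<le> k" unfolding T_def by (rule_tac Least_le) simp
    then show False using k that by simp
  qed
  have eq: "D_plus_at_T \<omega> \<xi> 0 K = Dsum K \<xi> T"
  proof -
    have "D_plus_at_T \<omega> \<xi> 0 K = D_plus \<omega> \<xi> 0 T"
      unfolding D_plus_at_T_def T_def using h by simp
    also have "\<dots> = (\<Sum>m<T. if 0 \<le> X \<xi> 0 m then 2 * pw (walk_hist \<xi> 0 m) - 1 else 0)"
      by (rule D_plus_eq)
    also have "\<dots> = Dsum K \<xi> T"
      unfolding Dsum_def by (intro sum.cong refl) (simp add: before)
    finally show ?thesis .
  qed
  then show "D_plus_at_T \<omega> \<xi> 0 K = Dsum K \<xi> (LEAST n. X \<xi> 0 n = K)" by (simp add: T_def)
  show "Dsum K \<xi> n \<le> D_plus_at_T \<omega> \<xi> 0 K"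
  proof (cases "n \<le> T")
    case True then show ?thesis using eq Dsum_mono by simp
  next
    case False then show ?thesis using eq Dsum_const_after[OF XT, of n] by simp
  qed
qed

lemma DT_nohit: "\<not> (\<exists>n. X \<xi> 0 n = K) \<Longrightarrow> D_plus_at_T \<omega> \<xi> 0 K = 0"
  by (simp add: D_plus_at_T_def)

lemma DT_upper:
  assumes K: "0 \<le> K"
  shows "(\<integral>\<^sup>+ \<xi>. ennreal (D_plus_at_T \<omega> \<xi> 0 K) \<partial>coin_space \<omega>) \<le> ennreal (real_of_int K)"
proof -
  have meas: "(\<lambda>\<xi>. ennreal (Dsum K \<xi> n)) \<in> borel_measurable (coin_space \<omega>)" for n
    using measurable_compose[OF borel_measurable_integrable[OF int_D] measurable_ennreal] by simp
  have inc: "incseq (\<lambda>n \<xi>. ennreal (Dsum K \<xi> n))"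
    unfolding incseq_def le_fun_def by (auto intro: ennreal_leI Dsum_mono)
  have "(\<integral>\<^sup>+ \<xi>. ennreal (D_plus_at_T \<omega> \<xi> 0 K) \<partial>coin_space \<omega>) \<le> (\<integral>\<^sup>+ \<xi>. (SUP n. ennreal (Dsum K \<xi> n)) \<partial>coin_space \<omega>)"
  proof (rule nn_integral_mono)
    fix \<xi>
    show "ennreal (D_plus_at_T \<omega> \<xi> 0 K) \<le> (SUP n. ennreal (Dsum K \<xi> n))"
    proof (cases "\<exists>n. X \<xi> 0 n = K")
      case True
      then show ?thesis using DT_hit(1)[OF True] by (auto intro: SUP_upper2)
    next
      case False
      then show ?thesis using DT_nohit[OF False] by simp
    qed
  qed
  also have "\<dots> = (SUP n. (\<integral>\<^sup>+ \<xi>. ennreal (Dsum K \<xi> n) \<partial>coin_space \<omega>))"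
    by (rule nn_integral_monotone_convergence_SUP[OF inc meas])
  also have "\<dots> \<le> ennreal (real_of_int K)"
  proof (rule SUP_least)
    fix n
    have "(\<integral>\<^sup>+ \<xi>. ennreal (Dsum K \<xi> n) \<partial>coin_space \<omega>) = ennreal (\<integral>\<xi>. Dsum K \<xi> n \<partial>coin_space \<omega>)"
      by (rule nn_integral_eq_integral[OF int_D]) (simp add: Dsum_nonneg)
    also have "\<dots> \<le> ennreal (real_of_int K)" by (rule ennreal_leI) (rule E_S_le[OF K])
    finally show "(\<integral>\<^sup>+ \<xi>. ennreal (Dsum K \<xi> n) \<partial>coin_space \<omega>) \<le> ennreal (real_of_int K)" .
  qed
  finally show ?thesis .
qed

lemma hit_AE:
  assumes K: "0 \<le> K"
  shows "AE \<xi> in coin_space \<omega>. \<exists>n. X \<xi> 0 n = K"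
proof -
  define N where "N = (\<Inter>n. {\<xi>. K \<notin> set (walk_hist \<xi> 0 n)})"
  have sN: "N \<in> sets (coin_space \<omega>)" unfolding N_def
    by (rule sets.countable_INT') (use fun_hist_sets[where Q="\<lambda>l. K \<notin> set l" and x=0] in auto)
  have bound: "measure (coin_space \<omega>) N \<le> real_of_int ((K + int M)^2) / real (Suc n) + 2 * real_of_int K / real M"
    if M: "1 \<le> M" for M n
  proof -
    have "measure (coin_space \<omega>) N \<le> measure (coin_space \<omega>) {\<xi>. K \<notin> set (walk_hist \<xi> 0 n)}"
      by (rule C.finite_measure_mono) (auto simp: N_def intro: fun_hist_sets)
    also have "{\<xi>. K \<notin> set (walk_hist \<xi> 0 n)} = space (coin_space \<omega>) - {\<xi>. K \<in> set (walk_hist \<xi> 0 n)}" by auto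
    also have "measure (coin_space \<omega>) \<dots> = 1 - hitp K n"
    proof -
      have hm: "hitp K n = measure (coin_space \<omega>) {\<xi>. K \<in> set (walk_hist \<xi> 0 n)}"
        unfolding hitp_def using ind_meas[where Q="\<lambda>l. K \<in> set l" and n=n and \<omega>=\<omega>] by simp
      show ?thesis unfolding hm
        by (rule C.prob_compl) (rule fun_hist_sets[where Q="\<lambda>l. K \<in> set l" and x=0])
    qed
    also have "\<dots> \<le> actp K (int M) n + 2 * real_of_int K / real_of_int (int M)"
      by (rule miss_le[OF K]) (use M in simp)
    also have "actp K (int M) n \<le> real_of_int ((K + int M)^2) / real (Suc n)"
      using actp_le[OF K, of "int M" n] by (simp add: field_simps del: of_int_power)
    finally show ?thesis by simp
  qed
  have "measure (coin_space \<omega>) N \<le> 0"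
    by (rule eps_bound[where f="\<lambda>M. real_of_int ((K + int M)^2)" and c="2 * real_of_int K"])
       (use bound K in auto)
  then have em: "emeasure (coin_space \<omega>) N = 0"
    by (simp add: C.emeasure_eq_measure measure_nonneg antisym)
  have eqN: "{x \<in> space (coin_space \<omega>). \<not> (\<exists>n. X x 0 n = K)} = N"
  proof -
    have ex: "(\<exists>n. X x 0 n = K) \<longleftrightarrow> (\<exists>n. K \<in> set (walk_hist x 0 n))" for x
    proof
      assume "\<exists>n. X x 0 n = K"
      then obtain n where "X x 0 n = K" by blast
      then have "K \<in> set (walk_hist x 0 n)" using in_hist[of n n x] by simp
      then show "\<exists>n. K \<in> set (walk_hist x 0 n)" by blast
    next
      assume "\<exists>n. K \<in> set (walk_hist x 0 n)"
      then obtain n where "K \<in> set (walk_hist x 0 n)" by blast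
      then obtain k where "X x 0 k = K" unfolding set_hist by blast
      then show "\<exists>n. X x 0 n = K" by blast
    qed
    show ?thesis
    proof (rule set_eqI)
      fix x
      show "x \<in> {x \<in> space (coin_space \<omega>). \<not> (\<exists>n. X x 0 n = K)} \<longleftrightarrow> x \<in> N"
      proof -
        have exn: "(\<forall>n. X x 0 n \<noteq> K) \<longleftrightarrow> (\<forall>n. K \<notin> set (walk_hist x 0 n))"
          using ex[of x] by (metis (no_types))
        then show ?thesis unfolding N_def by simp
      qed
    qed
  qed
  show ?thesis by (subst AE_iff_measurable[OF sN eqN]) (rule em)
qed

lemma DT_lower:
  assumes K: "0 \<le> K"
  shows "ennreal (\<integral>\<xi>. Dsum K \<xi> n \<partial>coin_space \<omega>) \<le> (\<integral>\<^sup>+ \<xi>. ennreal (D_plus_at_T \<omega> \<xi> 0 K) \<partial>coin_space \<omega>)"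
proof -
  have "ennreal (\<integral>\<xi>. Dsum K \<xi> n \<partial>coin_space \<omega>) = (\<integral>\<^sup>+ \<xi>. ennreal (Dsum K \<xi> n) \<partial>coin_space \<omega>)"
    by (rule nn_integral_eq_integral[OF int_D, symmetric]) (simp add: Dsum_nonneg)
  also have "\<dots> \<le> (\<integral>\<^sup>+ \<xi>. ennreal (D_plus_at_T \<omega> \<xi> 0 K) \<partial>coin_space \<omega>)"
    by (rule nn_integral_mono_AE) (use hit_AE[OF K] in \<open>eventually_elim, auto intro: ennreal_leI DT_hit(2)\<close>)
  finally show ?thesis .
qed

lemma s_bounds:
  assumes K1: "1 \<le> K" and j: "1 \<le> j"
  defines "s \<equiv> enn2real (\<integral>\<^sup>+ \<xi>. ennreal (D_plus_at_T \<omega> \<xi> 0 (int K)) \<partial>coin_space \<omega>)"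
  shows "(\<integral>\<^sup>+ \<xi>. ennreal (D_plus_at_T \<omega> \<xi> 0 (int K)) \<partial>coin_space \<omega>) = ennreal s"
    and "0 \<le> s" and "s \<le> real K"
    and "real K - (real j - 1) - 2 * real K * bj j \<le> s"
proof -
  let ?I = "(\<integral>\<^sup>+ \<xi>. ennreal (D_plus_at_T \<omega> \<xi> 0 (int K)) \<partial>coin_space \<omega>)"
  have K: "0 \<le> int K" by simp
  have up: "?I \<le> ennreal (real K)" using DT_upper[OF K] by simp
  then have fin: "?I < top" using le_less_trans ennreal_less_top by blast
  show I: "?I = ennreal s" unfolding s_def using fin by simp
  show "0 \<le> s" unfolding s_def by simp
  show "s \<le> real K" using up I by simp
  have lo: "(\<integral>\<xi>. Dsum (int K) \<xi> n \<partial>coin_space \<omega>) \<le> s" for n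
  proof -
    have "ennreal (\<integral>\<xi>. Dsum (int K) \<xi> n \<partial>coin_space \<omega>) \<le> ennreal s" using DT_lower[OF K, of n] I by simp
    then show ?thesis using \<open>0 \<le> s\<close> by (metis ennreal_le_iff)
  qed
  let ?A = "real K - (real j - 1) - 2 * real K * bj j"
  have "?A - s \<le> 0"
  proof (rule eps_bound[where f="\<lambda>M. real K * real_of_int ((int K + int M)^2)" and c="2 * real K * real K"])
    fix M n :: nat assume M: "1 \<le> M"
    have "?A - real K * (real_of_int ((int K + int M)^2) / real (Suc n) + 2 * real K / real M) \<le> s"
      using order_trans[OF E_lower[OF K j, of "int M" n] lo[of n]] M by simp
    moreover have "real K * (real_of_int ((int K + int M)^2) / real (Suc n) + 2 * real K / real M)
       = real K * real_of_int ((int K + int M)^2) / real (Suc n) + 2 * real K * real K / real M"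
      by (simp add: distrib_left del: of_int_power)
    ultimately show "?A - s \<le> real K * real_of_int ((int K + int M)^2) / real (Suc n) + 2 * real K * real K / real M"
      by linarith
  qed simp
  then show "?A \<le> s" by simp
qed

end

theorem mainTheorem6:
  assumes "\<omega> \<in> Omega_plus"
    and "transient_site \<omega> 0"
  shows "((\<lambda>K::nat. (\<integral>\<^sup>+ \<xi>. ennreal (D_plus_at_T \<omega> \<xi> 0 (int K)) \<partial>coin_space \<omega>) / of_nat K)
           \<longlongrightarrow> 1) sequentially"
proof -
  interpret cookie \<omega> by unfold_locales (rule assms(1))
  define s where "s K = enn2real (\<integral>\<^sup>+ \<xi>. ennreal (D_plus_at_T \<omega> \<xi> 0 (int K)) \<partial>coin_space \<omega>)" for K
  have lim: "(\<lambda>K. s K / real K) \<longlonglongrightarrow> 1"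
  proof (rule final_lim[OF bj_lim[OF assms(2)]])
    fix K :: nat assume "1 \<le> K" then show "s K \<le> real K" unfolding s_def by (rule s_bounds(3)[OF _ order_refl])
  next
    fix K j :: nat assume "1 \<le> K" "1 \<le> j"
    then show "real K - (real j - 1) - 2 * real K * bj j \<le> s K" unfolding s_def by (rule s_bounds(4))
  qed
  have "((\<lambda>K. ennreal (s K / real K)) \<longlongrightarrow> ennreal 1) sequentially"
    by (rule tendsto_ennrealI[OF lim])
  then have "((\<lambda>K. ennreal (s K / real K)) \<longlongrightarrow> 1) sequentially"
    by (simp only: ennreal_1)
  moreover have "eventually (\<lambda>K. ennreal (s K / real K) =
      (\<integral>\<^sup>+ \<xi>. ennreal (D_plus_at_T \<omega> \<xi> 0 (int K)) \<partial>coin_space \<omega>) / of_nat K) sequentially"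
  proof (rule eventually_sequentiallyI[of 1])
    fix K :: nat assume K1: "1 \<le> K"
    have I: "(\<integral>\<^sup>+ \<xi>. ennreal (D_plus_at_T \<omega> \<xi> 0 (int K)) \<partial>coin_space \<omega>) = ennreal (s K)"
      unfolding s_def by (rule s_bounds(1)[OF K1 order_refl])
    have s0: "0 \<le> s K" unfolding s_def by simp
    show "ennreal (s K / real K) = (\<integral>\<^sup>+ \<xi>. ennreal (D_plus_at_T \<omega> \<xi> 0 (int K)) \<partial>coin_space \<omega>) / of_nat K"
      unfolding I ennreal_of_nat_eq_real_of_nat using K1 s0 by (simp add: divide_ennreal)
  qed
  ultimately show ?thesis by (rule Lim_transform_eventually)
qed

end
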